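(* Let $\mathcal{F}$ be a fundamental polygon for a discrete subgroup $\Gamma\leq\mathrm{PSL}_2(\mathbb{R})$ of finite covolume, and let $I,J\subset\partial\mathcal{F}$ be non-empty, connected, open subsegments of the boundary which are not both contained in a single edge of $\mathcal{F}$. Then $\mu_G(\mathcal{G}(I,J))>0$.
   Context: $G=\mathrm{PSL}_2(\mathbb{R})$, $p:G\to\mathbb{H}$, $g\mapsto g\cdot i$, $\mu_G$ Haar measure on $G$, $a_t=\mathrm{diag}(e^{t/2},e^{-t/2})$. $\mathcal{G}(I,J)=\{g\in G:\exists\,\ell_1,\ell_2>0\text{ with }p(ga_{-\ell_1})\in I,\ p(ga_{\ell_2})\in J\}$. A fundamental polygon is an open convex $\mathcal{F}\subset\mathbb{H}$ whose closure is a convex hyperbolic polygon with finitely many geodesic sides, every point of $\mathbb{H}$ $\Gamma$-equivalent to a point of $\overline{\mathcal{F}}$, distinct $\Gamma$-equivalent points of $\overline{\mathcal{F}}$ lying on $\partial\mathcal{F}$. The edges of $\mathcal{F}$ are the maximal geodesic segments constituting $\partial\mathcal{F}$. *)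

theory Defs
  imports "HOL-Analysis.Analysis"
begin

section \<open>The group G = PSL_2(R), modelled by SL_2(R) matrices up to sign\<close>

definition SL2 :: "(real^2^2) set" where
  "SL2 = {A. det A = 1}"

definition mat2 :: "real \<Rightarrow> real \<Rightarrow> real \<Rightarrow> real \<Rightarrow> real^2^2" where
  "mat2 a b c d = vector [vector [a, b], vector [c, d]]"

definition mob :: "real^2^2 \<Rightarrow> complex \<Rightarrow> complex" where
  "mob A z = (complex_of_real (A$1$1) * z + complex_of_real (A$1$2)) /
             (complex_of_real (A$2$1) * z + complex_of_real (A$2$2))"

definition hplane :: "complex set" where
  "hplane = {z. Im z > 0}"

definition pmap :: "real^2^2 \<Rightarrow> complex" where
  "pmap g = mob g \<i>"

definition a_t :: "real \<Rightarrow> real^2^2" where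
  "a_t t = mat2 (exp (t/2)) 0 0 (exp (-t/2))"

definition iwasawa :: "real \<Rightarrow> real \<Rightarrow> real \<Rightarrow> real^2^2" where
  "iwasawa x t \<theta> = mat2 1 x 0 1 ** a_t t ** mat2 (cos \<theta>) (- sin \<theta>) (sin \<theta>) (cos \<theta>)"

text \<open>Haar measure on PSL_2(R) of (the set of classes \<plusminus>g of elements g of) S, in Iwasawa
  coordinates: d mu = e^(-t) dx dt d theta, theta in [0, pi).\<close>
definition haar_G :: "(real^2^2) set \<Rightarrow> ennreal" where
  "haar_G S = (\<integral>\<^sup>+ v. ennreal (exp (- fst (snd v))) *
      indicator {v :: real \<times> real \<times> real. snd (snd v) \<in> {0..<pi} \<and>
        (iwasawa (fst v) (fst (snd v)) (snd (snd v)) \<in> S \<or>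
         - iwasawa (fst v) (fst (snd v)) (snd (snd v)) \<in> S)} v \<partial>lborel)"

definition geod_set :: "complex set \<Rightarrow> complex set \<Rightarrow> (real^2^2) set" where
  "geod_set I J = {g \<in> SL2. \<exists>l1 l2. l1 > 0 \<and> l2 > 0 \<and>
       pmap (g ** a_t (- l1)) \<in> I \<and> pmap (g ** a_t l2) \<in> J}"

section \<open>Discrete subgroups (as preimages in SL_2(R)) and finite covolume\<close>

definition discrete_subgroup :: "(real^2^2) set \<Rightarrow> bool" where
  "discrete_subgroup \<Gamma> \<longleftrightarrow> \<Gamma> \<subseteq> SL2 \<and> mat 1 \<in> \<Gamma> \<and> - mat 1 \<in> \<Gamma> \<and>
     (\<forall>g\<in>\<Gamma>. \<forall>h\<in>\<Gamma>. g ** h \<in> \<Gamma>) \<and> (\<forall>g\<in>\<Gamma>. matrix_inv g \<in> \<Gamma>) \<and>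
     (\<forall>g\<in>\<Gamma>. \<exists>e>0. \<forall>h\<in>\<Gamma>. dist h g < e \<longrightarrow> h = g)"

text \<open>Finite covolume: some measurable fundamental domain for the left action of \<Gamma> on G
  (meeting each orbit in exactly one class \<plusminus>g) has finite Haar measure.\<close>
definition finite_covolume :: "(real^2^2) set \<Rightarrow> bool" where
  "finite_covolume \<Gamma> \<longleftrightarrow> (\<exists>D. D \<subseteq> SL2 \<and> D \<in> sets borel \<and>
     (\<forall>g\<in>SL2. \<exists>\<gamma>\<in>\<Gamma>. \<gamma> ** g \<in> D) \<and>
     (\<forall>g\<in>D. \<forall>\<gamma>\<in>\<Gamma>. \<gamma> ** g \<in> D \<longrightarrow> \<gamma> ** g = g \<or> \<gamma> ** g = - g) \<and>
     haar_G D < \<infinity>)"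

definition hdist :: "complex \<Rightarrow> complex \<Rightarrow> real" where
  "hdist z w = arcosh (1 + (cmod (z - w))\<^sup>2 / (2 * Im z * Im w))"

definition hseg :: "complex \<Rightarrow> complex \<Rightarrow> complex set" where
  "hseg z w = {u \<in> hplane. hdist z u + hdist u w = hdist z w}"

definition hconvex :: "complex set \<Rightarrow> bool" where
  "hconvex S \<longleftrightarrow> S \<subseteq> hplane \<and> (\<forall>z\<in>S. \<forall>w\<in>S. hseg z w \<subseteq> S)"

definition geodesic_line :: "complex set \<Rightarrow> bool" where
  "geodesic_line L \<longleftrightarrow> (\<exists>c. L = {z. Im z > 0 \<and> Re z = c}) \<or>
     (\<exists>c r. r > 0 \<and> L = {z. Im z > 0 \<and> cmod (z - complex_of_real c) = r})"

definition geodesic_side :: "complex set \<Rightarrow> bool" where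
  "geodesic_side S \<longleftrightarrow> (\<exists>L. geodesic_line L \<and> S \<subseteq> L) \<and> connected S \<and>
     closedin (top_of_set hplane) S \<and> (\<exists>z w. z \<in> S \<and> w \<in> S \<and> z \<noteq> w)"

definition hbd :: "complex set \<Rightarrow> complex set" where
  "hbd F = frontier F \<inter> hplane"

definition poly_edge :: "complex set \<Rightarrow> complex set \<Rightarrow> bool" where
  "poly_edge F E \<longleftrightarrow> geodesic_side E \<and> E \<subseteq> hbd F \<and>
     (\<forall>E'. geodesic_side E' \<and> E \<subseteq> E' \<and> E' \<subseteq> hbd F \<longrightarrow> E' = E)"

definition fundamental_polygon :: "(real^2^2) set \<Rightarrow> complex set \<Rightarrow> bool" where
  "fundamental_polygon \<Gamma> F \<longleftrightarrow>
     open F \<and> F \<subseteq> hplane \<and> hconvex F \<and> hconvex (closure F \<inter> hplane) \<and>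
     (\<exists>Ss. finite Ss \<and> (\<forall>S\<in>Ss. geodesic_side S) \<and> \<Union>Ss = hbd F) \<and>
     (\<forall>z\<in>hplane. \<exists>\<gamma>\<in>\<Gamma>. mob \<gamma> z \<in> closure F) \<and>
     (\<forall>z\<in>closure F \<inter> hplane. \<forall>w\<in>closure F \<inter> hplane.
        z \<noteq> w \<and> (\<exists>\<gamma>\<in>\<Gamma>. mob \<gamma> z = w) \<longrightarrow> z \<in> hbd F \<and> w \<in> hbd F)"

end

theory Submission
  imports Defs
begin

lemma mm_entries:
  fixes A B :: "real^2^2"
  shows "(A ** B)$1$1 = A$1$1*B$1$1 + A$1$2*B$2$1"
    "(A ** B)$1$2 = A$1$1*B$1$2 + A$1$2*B$2$2"
    "(A ** B)$2$1 = A$2$1*B$1$1 + A$2$2*B$2$1"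
    "(A ** B)$2$2 = A$2$1*B$1$2 + A$2$2*B$2$2"
  by (simp_all add: matrix_matrix_mult_def sum_2)

lemma mat2_entries [simp]:
  "mat2 a b c d $1$1 = a" "mat2 a b c d $1$2 = b" "mat2 a b c d $2$1 = c" "mat2 a b c d $2$2 = d"
  by (simp_all add: mat2_def)

lemma mat_eqI2:
  fixes A B :: "real^2^2"
  assumes "A$1$1 = B$1$1" "A$1$2 = B$1$2" "A$2$1 = B$2$1" "A$2$2 = B$2$2"
  shows "A = B"
  using assms by (simp add: vec_eq_iff forall_2)

lemma det2: "det (A::real^2^2) = A$1$1 * A$2$2 - A$1$2 * A$2$1"
  by (rule det_2)

lemma iwasawa_entries:
  "iwasawa x t th $1$1 = exp (t/2) * cos th + x * exp (-t/2) * sin th"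
  "iwasawa x t th $1$2 = - exp (t/2) * sin th + x * exp (-t/2) * cos th"
  "iwasawa x t th $2$1 = exp (-t/2) * sin th"
  "iwasawa x t th $2$2 = exp (-t/2) * cos th"
  by (simp_all add: iwasawa_def a_t_def mm_entries algebra_simps)

lemma cmod_lin_sq: "(cmod (complex_of_real c * z + complex_of_real d))^2 = (c * Re z + d)^2 + (c * Im z)^2"
  by (simp add: cmod_power2)

lemma denom_nz:
  fixes g :: "real^2^2"
  assumes "det g = 1" "Im z > 0"
  shows "complex_of_real (g$2$1) * z + complex_of_real (g$2$2) \<noteq> 0"
proof
  assume h: "complex_of_real (g$2$1) * z + complex_of_real (g$2$2) = 0"
  hence "(g$2$1 * Re z + g$2$2)^2 + (g$2$1 * Im z)^2 = 0"
    by (metis cmod_lin_sq norm_zero power_zero_numeral)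
  hence "g$2$1 * Im z = 0" "g$2$1 * Re z + g$2$2 = 0"
    by (simp_all add: sum_power2_eq_zero_iff)
  with assms show False by (auto simp: det2)
qed

lemma Im_mob:
  fixes g :: "real^2^2"
  assumes "det g = 1" "Im z > 0"
  shows "Im (mob g z) = Im z / (cmod (complex_of_real (g$2$1) * z + complex_of_real (g$2$2)))^2"
  using assms unfolding cmod_lin_sq
  by (simp add: mob_def Im_divide det2 algebra_simps power2_eq_square)

lemma mob_hplane:
  fixes g :: "real^2^2"
  assumes "det g = 1" "Im z > 0"
  shows "Im (mob g z) > 0"
  using Im_mob[OF assms] denom_nz[OF assms] assms by simp

lemma mob_diff:
  fixes g :: "real^2^2"
  assumes "det g = 1" "Im z > 0" "Im w > 0"
  shows "mob g z - mob g w = (z - w) / ((complex_of_real (g$2$1) * z + complex_of_real (g$2$2)) * (complex_of_real (g$2$1) * w + complex_of_real (g$2$2)))"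
proof -
  define a where "a = complex_of_real (g$1$1)"
  define b where "b = complex_of_real (g$1$2)"
  define c where "c = complex_of_real (g$2$1)"
  define d where "d = complex_of_real (g$2$2)"
  have dt: "a * d - b * c = 1"
    using assms(1) by (simp add: det2 a_def b_def c_def d_def flip: of_real_mult of_real_diff)
  have n1: "c * z + d \<noteq> 0" and n2: "c * w + d \<noteq> 0"
    using denom_nz[OF assms(1,2)] denom_nz[OF assms(1,3)] by (simp_all add: c_def d_def)
  have "(a*z+b)/(c*z+d) - (a*w+b)/(c*w+d) = ((a*z+b)*(c*w+d) - (a*w+b)*(c*z+d)) / ((c*z+d)*(c*w+d))"
    using n1 n2 by (simp add: field_simps)
  also have "(a*z+b)*(c*w+d) - (a*w+b)*(c*z+d) = (a*d - b*c) * (z - w)"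
    by (simp add: algebra_simps)
  finally show ?thesis using dt by (simp add: mob_def a_def b_def c_def d_def)
qed

lemma hdist_mob:
  fixes g :: "real^2^2"
  assumes "det g = 1" "Im z > 0" "Im w > 0"
  shows "hdist (mob g z) (mob g w) = hdist z w"
proof -
  define N where "N = (\<lambda>z. cmod (complex_of_real (g$2$1) * z + complex_of_real (g$2$2)))"
  have nz: "N z > 0" "N w > 0" using denom_nz assms by (auto simp: N_def)
  have e1: "cmod (mob g z - mob g w) = cmod (z - w) / (N z * N w)"
    by (simp add: mob_diff[OF assms] norm_divide norm_mult N_def)
  have e2: "Im (mob g z) = Im z / (N z)^2" "Im (mob g w) = Im w / (N w)^2"
    using Im_mob assms by (auto simp: N_def)
  have "(cmod (mob g z - mob g w))^2 / (2 * Im (mob g z) * Im (mob g w))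
      = (cmod (z - w))^2 / (2 * Im z * Im w)"
    unfolding e1 e2 using nz assms
    by (simp add: power_divide power_mult_distrib field_simps)
  thus ?thesis by (simp add: hdist_def)
qed

lemma hdist_sym: "hdist z w = hdist w z"
  by (simp add: hdist_def norm_minus_commute mult.commute mult.left_commute)

lemma hdist_iaxis:
  assumes "u > 0" "v > 0"
  shows "hdist (\<i> * complex_of_real u) (\<i> * complex_of_real v) = \<bar>ln u - ln v\<bar>"
proof -
  have "cmod (\<i> * complex_of_real u - \<i> * complex_of_real v) = \<bar>u - v\<bar>"
    by (simp add: cmod_def)
  hence "1 + (cmod (\<i> * complex_of_real u - \<i> * complex_of_real v))^2 / (2 * Im (\<i> * complex_of_real u) * Im (\<i> * complex_of_real v))
       = cosh (ln u - ln v)"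
    using assms by (simp add: cosh_def exp_diff power2_eq_square field_simps)
  hence "hdist (\<i> * complex_of_real u) (\<i> * complex_of_real v) = arcosh (cosh \<bar>ln u - ln v\<bar>)"
    by (simp add: hdist_def)
  moreover have "cosh \<bar>ln u - ln v\<bar> = cosh (ln u - ln v)"
    by (cases "ln u - ln v \<ge> 0") (auto simp: abs_if)
  ultimately show ?thesis by (metis arcosh_cosh_real abs_ge_zero)
qed

definition psi :: "real \<Rightarrow> real \<Rightarrow> real \<Rightarrow> complex \<Rightarrow> real" where
  "psi A B C z = A * (cmod z)^2 + B * Re z + C"

lemma pmap_at: "pmap (g ** a_t t) = mob g (\<i> * complex_of_real (exp t))"
proof -
  have e: "exp (t/2) * exp (t/2) = exp t" by (simp flip: exp_add)
  have "pmap (g ** a_t t) = (complex_of_real (g$1$1 * exp (t/2)) * \<i> + complex_of_real (g$1$2 * exp (-t/2))) /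
     (complex_of_real (g$2$1 * exp (t/2)) * \<i> + complex_of_real (g$2$2 * exp (-t/2)))"
    by (simp add: pmap_def mob_def a_t_def mm_entries)
  also have "\<dots> = (complex_of_real (exp (t/2)) * (complex_of_real (g$1$1) * (\<i> * complex_of_real (exp t)) + complex_of_real (g$1$2))) /
     (complex_of_real (exp (t/2)) * (complex_of_real (g$2$1) * (\<i> * complex_of_real (exp t)) + complex_of_real (g$2$2)))"
    by (simp add: algebra_simps exp_minus e field_simps flip: of_real_mult)
  also have "\<dots> = mob g (\<i> * complex_of_real (exp t))"
    by (simp add: mob_def)
  finally show ?thesis .
qed

lemma mob_neg: "mob (- g) z = mob g z"
proof -
  have e: "(- a - b)/(- c - d) = (a+b)/(c+d)" for a b c d :: complex
  proof -
    have "(- a - b)/(- c - d) = (-(a+b))/(-(c+d))" by simp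
    also have "\<dots> = (a+b)/(c+d)" by (rule minus_divide_divide)
    finally show ?thesis .
  qed
  show ?thesis by (simp add: mob_def e)
qed

lemma det_neg2: "det (- (g::real^2^2)) = det g"
  by (simp add: det2)

lemma det_iwasawa: "det (iwasawa x t th) = 1"
proof -
  have e: "exp (t/2) * exp (-t/2) = 1" by (simp flip: exp_add)
  have "det (iwasawa x t th) = (exp (t/2) * exp (-t/2)) * (cos th * cos th + sin th * sin th)"
    by (simp only: det2 iwasawa_entries) algebra
  also have "\<dots> = 1" by (simp only: e sin_cos_squared_add[unfolded power2_eq_square]) simp
  finally show ?thesis .
qed

lemma mob_iu:
  fixes g :: "real^2^2"
  assumes "det g = 1" "u > 0"
  shows "Re (mob g (\<i> * complex_of_real u)) = (g$1$1 * g$2$1 * u^2 + g$1$2 * g$2$2) / ((g$2$1 * u)^2 + (g$2$2)^2)"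
    "Im (mob g (\<i> * complex_of_real u)) = u / ((g$2$1 * u)^2 + (g$2$2)^2)"
    "(cmod (mob g (\<i> * complex_of_real u)))^2 = ((g$1$1 * u)^2 + (g$1$2)^2) / ((g$2$1 * u)^2 + (g$2$2)^2)"
proof -
  have dt: "g$1$1 * g$2$2 - g$1$2 * g$2$1 = 1" using assms by (simp add: det2)
  show r: "Re (mob g (\<i> * complex_of_real u)) = (g$1$1 * g$2$1 * u^2 + g$1$2 * g$2$2) / ((g$2$1 * u)^2 + (g$2$2)^2)"
    by (simp add: mob_def Re_divide power2_eq_square algebra_simps)
  have "Im (mob g (\<i> * complex_of_real u)) = (g$1$1 * g$2$2 - g$1$2 * g$2$1) * u / ((g$2$1 * u)^2 + (g$2$2)^2)"
    by (simp add: mob_def Im_divide power2_eq_square algebra_simps diff_divide_distrib)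
  thus i: "Im (mob g (\<i> * complex_of_real u)) = u / ((g$2$1 * u)^2 + (g$2$2)^2)"
    using dt by simp
  have D: "(g$2$1 * u)^2 + (g$2$2)^2 > 0"
  proof -
    have "\<not> (g$2$1 = 0 \<and> g$2$2 = 0)" using dt by auto
    thus ?thesis using assms by (auto simp: sum_power2_gt_zero_iff)
  qed
  have key: "(g$1$1 * g$2$1 * u^2 + g$1$2 * g$2$2)^2 + u^2 = ((g$1$1 * u)^2 + (g$1$2)^2) * ((g$2$1 * u)^2 + (g$2$2)^2)"
  proof -
    have "((g$1$1 * u)^2 + (g$1$2)^2) * ((g$2$1 * u)^2 + (g$2$2)^2) - (g$1$1 * g$2$1 * u^2 + g$1$2 * g$2$2)^2
      = u^2 * (g$1$1 * g$2$2 - g$1$2 * g$2$1)^2"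
      by (simp add: power2_eq_square algebra_simps)
    thus ?thesis using dt by simp
  qed
  show "(cmod (mob g (\<i> * complex_of_real u)))^2 = ((g$1$1 * u)^2 + (g$1$2)^2) / ((g$2$1 * u)^2 + (g$2$2)^2)"
  proof -
    define P where "P = g$1$1 * g$2$1 * u^2 + g$1$2 * g$2$2"
    define N where "N = (g$1$1 * u)^2 + (g$1$2)^2"
    define DD where "DD = (g$2$1 * u)^2 + (g$2$2)^2"
    have "(cmod (mob g (\<i> * complex_of_real u)))^2 = (P/DD)^2 + (u/DD)^2"
      unfolding cmod_power2 r i P_def DD_def by simp
    also have "\<dots> = (P^2 + u^2) / DD^2" by (simp add: power_divide add_divide_distrib)
    also have "P^2 + u^2 = N * DD" using key by (simp add: P_def N_def DD_def)
    also have "N * DD / DD^2 = N / DD" using D by (simp add: DD_def power2_eq_square)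
    finally show ?thesis by (simp add: N_def DD_def)
  qed
qed

lemma denom_pos:
  fixes g :: "real^2^2"
  assumes "det g = 1" "u > 0"
  shows "(g$2$1 * u)^2 + (g$2$2)^2 > 0"
proof -
  have "\<not> (g$2$1 = 0 \<and> g$2$2 = 0)" using assms by (auto simp: det2)
  thus ?thesis using assms by (auto simp: sum_power2_gt_zero_iff)
qed

lemma mdc_helper: "(D::real) > 0 \<Longrightarrow> x = N / D \<Longrightarrow> x * D = N" by simp

lemma psi_mob_iu:
  fixes g :: "real^2^2"
  assumes "det g = 1" "u > 0"
  shows "psi A B C (mob g (\<i> * complex_of_real u)) * ((g$2$1 * u)^2 + (g$2$2)^2)
     = (A * (g$1$1)^2 + B * g$1$1 * g$2$1 + C * (g$2$1)^2) * u^2 + (A * (g$1$2)^2 + B * g$1$2 * g$2$2 + C * (g$2$2)^2)"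
proof -
  define D where "D = (g$2$1 * u)^2 + (g$2$2)^2"
  define m where "m = mob g (\<i> * complex_of_real u)"
  have D: "D > 0" using denom_pos[OF assms] by (simp add: D_def)
  have 1: "(cmod m)^2 * D = (g$1$1 * u)^2 + (g$1$2)^2"
    using mdc_helper[OF D mob_iu(3)[OF assms, folded D_def]] by (simp add: m_def)
  have 2: "Re m * D = g$1$1 * g$2$1 * u^2 + g$1$2 * g$2$2"
    using mdc_helper[OF D mob_iu(1)[OF assms, folded D_def]] by (simp add: m_def)
  have "psi A B C m * D = A * ((cmod m)^2 * D) + B * (Re m * D) + C * D"
    by (simp add: psi_def algebra_simps)
  also have "\<dots> = (A * (g$1$1)^2 + B * g$1$1 * g$2$1 + C * (g$2$1)^2) * u^2 + (A * (g$1$2)^2 + B * g$1$2 * g$2$2 + C * (g$2$2)^2)"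
    unfolding 1 2 by (simp add: D_def algebra_simps power2_eq_square)
  finally show ?thesis by (simp add: m_def D_def)
qed

lemma mob_comp:
  fixes A B :: "real^2^2"
  assumes "det B = 1" "Im z > 0"
  shows "mob (A ** B) z = mob A (mob B z)"
proof -
  define w where "w = complex_of_real (B$2$1) * z + complex_of_real (B$2$2)"
  have w: "w \<noteq> 0" using denom_nz[OF assms] by (simp add: w_def)
  have "mob A (mob B z) = (complex_of_real (A$1$1) * (complex_of_real (B$1$1) * z + complex_of_real (B$1$2)) + complex_of_real (A$1$2) * w) /
      (complex_of_real (A$2$1) * (complex_of_real (B$1$1) * z + complex_of_real (B$1$2)) + complex_of_real (A$2$2) * w)"
  proof -
    define N where "N = complex_of_real (B$1$1) * z + complex_of_real (B$1$2)"
    have "mob A (mob B z) = (complex_of_real (A$1$1) * (N/w) + complex_of_real (A$1$2)) / (complex_of_real (A$2$1) * (N/w) + complex_of_real (A$2$2))"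
      by (simp add: mob_def N_def w_def)
    also have "complex_of_real (A$1$1) * (N/w) + complex_of_real (A$1$2) = (complex_of_real (A$1$1) * N + complex_of_real (A$1$2) * w) / w"
      using w by (simp add: field_simps)
    also have "complex_of_real (A$2$1) * (N/w) + complex_of_real (A$2$2) = (complex_of_real (A$2$1) * N + complex_of_real (A$2$2) * w) / w"
      using w by (simp add: field_simps)
    finally show ?thesis using w by (simp add: N_def)
  qed
  also have "\<dots> = mob (A ** B) z"
    by (simp add: mob_def mm_entries w_def algebra_simps)
  finally show ?thesis by simp
qed

lemma iwasawa_shift: "iwasawa x t (th - pi) = - iwasawa x t th"
  by (rule mat_eqI2) (simp_all add: iwasawa_entries sin_diff cos_diff)

lemma iwasawa_exists:
  fixes g :: "real^2^2"
  assumes "det g = 1"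
  shows "\<exists>x t th. iwasawa x t th = g"
proof -
  define a where "a = g$1$1"
  define b where "b = g$1$2"
  define c where "c = g$2$1"
  define d where "d = g$2$2"
  have dt: "a * d - b * c = 1" using assms by (simp add: det2 a_def b_def c_def d_def)
  define \<rho> where "\<rho> = sqrt (c^2 + d^2)"
  have cd: "c^2 + d^2 > 0"
  proof -
    have "\<not> (c = 0 \<and> d = 0)" using dt by auto
    thus ?thesis by (auto simp: sum_power2_gt_zero_iff)
  qed
  hence rp: "\<rho> > 0" by (simp add: \<rho>_def)
  have r2: "\<rho>^2 = c^2 + d^2" using cd by (simp add: \<rho>_def)
  have "(d/\<rho>)^2 + (c/\<rho>)^2 = (c^2 + d^2)/\<rho>^2" by (simp add: power_divide add_divide_distrib)
  hence "(d/\<rho>)^2 + (c/\<rho>)^2 = 1" using r2 rp cd by (metis divide_self less_irrefl)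
  then obtain th where th: "d/\<rho> = cos th" "c/\<rho> = sin th" by (metis sincos_total_2pi)
  define t where "t = -2 * ln \<rho>"
  have e1: "exp (t/2) = 1/\<rho>" using rp by (simp add: t_def exp_minus inverse_eq_divide)
  have e2: "exp (-(t/2)) = \<rho>" "exp (-t/2) = \<rho>" using rp by (simp_all add: t_def)
  define x where "x = (a*c + b*d)/\<rho>^2"
  have c': "c = \<rho> * sin th" "d = \<rho> * cos th" using th rp by (simp_all add: field_simps)
  have "iwasawa x t th = g"
  proof (rule mat_eqI2)
    show "iwasawa x t th $ 2 $ 1 = g $ 2 $ 1" using c' by (simp add: iwasawa_entries e2 c_def)
    show "iwasawa x t th $ 2 $ 2 = g $ 2 $ 2" using c' by (simp add: iwasawa_entries e2 d_def)
    have "iwasawa x t th $ 1 $ 1 = (d + (a*c+b*d)*c)/\<rho>^2"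
      using rp th by (simp add: iwasawa_entries e1 e2 x_def field_simps power2_eq_square)
    also have "(d + (a*c+b*d)*c) = a * \<rho>^2"
    proof -
      have bc: "b*c = a*d - 1" using dt by simp
      have "d + (a*c+b*d)*c = d + a*c^2 + (b*c)*d" by (simp add: algebra_simps power2_eq_square)
      also have "\<dots> = d + a*c^2 + (a*d - 1)*d" by (simp only: bc)
      finally have "d + (a*c+b*d)*c = d + a*c^2 + (a*d - 1)*d" .
      also have "\<dots> = a * (c^2 + d^2)" by (simp add: algebra_simps power2_eq_square)
      finally show ?thesis using r2 by simp
    qed
    finally show "iwasawa x t th $ 1 $ 1 = g $ 1 $ 1" using rp by (simp add: a_def)
    have "iwasawa x t th $ 1 $ 2 = (- c + (a*c+b*d)*d)/\<rho>^2"
      using rp th by (simp add: iwasawa_entries e1 e2 x_def field_simps power2_eq_square)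
    also have "(- c + (a*c+b*d)*d) = b * \<rho>^2"
    proof -
      have ad: "a*d = 1 + b*c" using dt by simp
      have "- c + (a*c+b*d)*d = - c + (a*d)*c + b*d*d" by (simp add: algebra_simps)
      also have "\<dots> = - c + (1 + b*c)*c + b*d*d" by (simp only: ad)
      finally have "- c + (a*c+b*d)*d = - c + (1 + b*c)*c + b*d*d" .
      also have "\<dots> = b * (c^2 + d^2)" by (simp add: algebra_simps power2_eq_square)
      finally show ?thesis using r2 by simp
    qed
    finally show "iwasawa x t th $ 1 $ 2 = g $ 1 $ 2" using rp by (simp add: b_def)
  qed
  thus ?thesis by blast
qed

lemma iwasawa_exists_pi:
  fixes g :: "real^2^2"
  assumes "det g = 1"
  shows "\<exists>x t th. 0 \<le> th \<and> th < pi \<and> (iwasawa x t th = g \<or> iwasawa x t th = - g)"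
proof -
  obtain x t th where h: "iwasawa x t th = g" using iwasawa_exists[OF assms] by blast
  define k where "k = floor (th / pi)"
  define th' where "th' = th - of_int k * pi"
  have "of_int k \<le> th/pi" "th/pi < of_int k + 1" unfolding k_def by linarith+
  hence b: "0 \<le> th'" "th' < pi" unfolding th'_def using pi_gt_zero
    by (simp_all add: field_simps)
  have "\<forall>n::nat. iwasawa x t (th - of_nat n * pi) = (if even n then g else - g) \<and>
                  iwasawa x t (th + of_nat n * pi) = (if even n then g else - g)"
  proof
    fix n :: nat show "iwasawa x t (th - of_nat n * pi) = (if even n then g else - g) \<and>
                  iwasawa x t (th + of_nat n * pi) = (if even n then g else - g)"
    proof (induction n)
      case 0 thus ?case using h by simp
    next
      case (Suc n)
      have e1: "th - of_nat (Suc n) * pi = (th - of_nat n * pi) - pi" by (simp add: algebra_simps)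
      have e2: "th + of_nat n * pi = (th + of_nat (Suc n) * pi) - pi" by (simp add: algebra_simps)
      have "iwasawa x t (th + of_nat n * pi) = - iwasawa x t (th + of_nat (Suc n) * pi)"
        using iwasawa_shift[of x t "th + of_nat (Suc n) * pi"] unfolding e2[symmetric] .
      hence "iwasawa x t (th + of_nat (Suc n) * pi) = - iwasawa x t (th + of_nat n * pi)"
        by simp
      moreover have "iwasawa x t (th - of_nat (Suc n) * pi) = - iwasawa x t (th - of_nat n * pi)"
        unfolding e1 by (rule iwasawa_shift)
      ultimately show ?case using Suc by auto
    qed
  qed
  note P = this
  have "iwasawa x t th' = g \<or> iwasawa x t th' = - g"
  proof (cases "k \<ge> 0")
    case True
    then obtain n where n: "k = int n" using nonneg_int_cases by blast
    have "th' = th - of_nat n * pi" by (simp add: th'_def n)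
    thus ?thesis using P[rule_format, of n] by (cases "even n") auto
  next
    case False
    then obtain n where n: "k = - int n" by (metis linorder_le_cases neg_0_le_iff_le nonneg_int_cases add.inverse_inverse)
    have "th' = th + of_nat n * pi" by (simp add: th'_def n)
    thus ?thesis using P[rule_format, of n] by (cases "even n") auto
  qed
  thus ?thesis using b by blast
qed

lemma circ_point:
  assumes r: "r > 0" and z: "(Re z - c)^2 + (Im z)^2 = r^2" and y: "Im z > 0"
  defines "s \<equiv> sqrt (2*r)"
  defines "g \<equiv> mat2 ((c+r)/s) ((c-r)/s) (1/s) (1/s)"
  defines "u \<equiv> Im z / (r - (Re z - c))"
  shows "det g = 1" "u > 0" "mob g (\<i> * complex_of_real u) = z"
proof -
  have s: "s > 0" "s^2 = 2*r" using r by (simp_all add: s_def)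
  show "det g = 1" using s by (simp add: g_def det2 field_simps) (simp add: power2_eq_square)
  have p: "\<bar>Re z - c\<bar> < r"
  proof -
    have "(Re z - c)^2 < r^2" using z y by (simp add: power2_eq_square) (smt (verit) mult_pos_pos)
    thus ?thesis using r by (metis abs_of_pos power2_abs power_less_imp_less_base abs_ge_zero)
  qed
  hence rp: "r - (Re z - c) > 0" by simp
  thus up: "u > 0" using y by (simp add: u_def)
  have key: "complex_of_real (c+r) * (\<i> * complex_of_real u) + complex_of_real (c-r) = z * (\<i> * complex_of_real u + 1)"
  proof (rule complex_eqI)
    have "(Im z)^2 = (r - (Re z - c)) * (r + (Re z - c))" using z by (simp add: algebra_simps power2_eq_square)
    hence "Im z * u = r + (Re z - c)" using rp unfolding u_def by (simp add: field_simps power2_eq_square)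
    thus "Re (complex_of_real (c+r) * (\<i> * complex_of_real u) + complex_of_real (c-r)) = Re (z * (\<i> * complex_of_real u + 1))"
      by (simp add: algebra_simps)
    have "(r - (Re z - c)) * u = Im z" using rp unfolding u_def by simp
    thus "Im (complex_of_real (c+r) * (\<i> * complex_of_real u) + complex_of_real (c-r)) = Im (z * (\<i> * complex_of_real u + 1))"
      by (simp add: algebra_simps)
  qed
  have nz: "\<i> * complex_of_real u + 1 \<noteq> 0"
  proof
    assume "\<i> * complex_of_real u + 1 = 0"
    hence "Re (\<i> * complex_of_real u + 1) = 0" by simp
    thus False by simp
  qed
  have "mob g (\<i> * complex_of_real u) = (complex_of_real (1/s) * (complex_of_real (c+r) * (\<i> * complex_of_real u) + complex_of_real (c-r))) /
     (complex_of_real (1/s) * (\<i> * complex_of_real u + 1))"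
  proof -
    have "complex_of_real ((c+r)/s) * (\<i> * complex_of_real u) + complex_of_real ((c-r)/s) =
       complex_of_real (1/s) * (complex_of_real (c+r) * (\<i> * complex_of_real u) + complex_of_real (c-r))"
      by (simp only: of_real_divide of_real_1) (simp add: add_divide_distrib[symmetric] diff_divide_distrib[symmetric] algebra_simps)
    moreover have "complex_of_real (1/s) * (\<i> * complex_of_real u) + complex_of_real (1/s) =
       complex_of_real (1/s) * (\<i> * complex_of_real u + 1)"
      by (simp add: algebra_simps)
    ultimately show ?thesis by (simp only: mob_def g_def mat2_entries)
  qed
  also have "\<dots> = z" unfolding key using nz s by simp
  finally show "mob g (\<i> * complex_of_real u) = z" .
qed

lemma geod_two:
  assumes "Im z1 > 0" "Im z2 > 0" "z1 \<noteq> z2"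
  shows "\<exists>g u1 u2. det g = 1 \<and> u1 > 0 \<and> u2 > 0 \<and> u1 \<noteq> u2 \<and>
           mob g (\<i> * complex_of_real u1) = z1 \<and> mob g (\<i> * complex_of_real u2) = z2"
proof (cases "Re z1 = Re z2")
  case True
  define g where "g = mat2 1 (Re z1) 0 1"
  have m: "mob g (\<i> * complex_of_real u) = complex_of_real (Re z1) + \<i> * complex_of_real u" for u
    by (simp add: mob_def g_def)
  have "Im z1 \<noteq> Im z2" using True assms(3) complex_eqI by blast
  moreover have "mob g (\<i> * complex_of_real (Im z1)) = z1" "mob g (\<i> * complex_of_real (Im z2)) = z2"
    unfolding m using True by (simp_all add: complex_eq_iff)
  moreover have "det g = 1" by (simp add: g_def det2)
  ultimately show ?thesis using assms by blast
next
  case False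
  define c where "c = ((Re z2)^2 + (Im z2)^2 - (Re z1)^2 - (Im z1)^2) / (2 * (Re z2 - Re z1))"
  define r where "r = sqrt ((Re z1 - c)^2 + (Im z1)^2)"
  have rp: "r > 0" using assms(1) by (simp add: r_def add_nonneg_pos)
  have e1: "(Re z1 - c)^2 + (Im z1)^2 = r^2" unfolding r_def by (simp add: add_nonneg_nonneg)
  have "c * (2 * (Re z2 - Re z1)) = (Re z2)^2 + (Im z2)^2 - (Re z1)^2 - (Im z1)^2"
    using False by (simp add: c_def)
  hence "(Re z2 - c)^2 + (Im z2)^2 = (Re z1 - c)^2 + (Im z1)^2"
    by (simp add: power2_eq_square algebra_simps)
  hence e2: "(Re z2 - c)^2 + (Im z2)^2 = r^2" using e1 by simp
  note A = circ_point[OF rp e1 assms(1)] and B = circ_point[OF rp e2 assms(2)]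
  have "Im z1 / (r - (Re z1 - c)) \<noteq> Im z2 / (r - (Re z2 - c))"
    using A(3) B(3) assms(3) by metis
  thus ?thesis using A B by blast
qed

lemma geod_oriented:
  assumes "Im z1 > 0" "Im z2 > 0" "z1 \<noteq> z2"
  shows "\<exists>g l1 l2. det g = 1 \<and> l1 > 0 \<and> l2 > 0 \<and>
           mob g (\<i> * complex_of_real (exp (-l1))) = z1 \<and> mob g (\<i> * complex_of_real (exp l2)) = z2"
proof -
  obtain g0 u1 u2 where g0: "det g0 = 1" "u1 > 0" "u2 > 0" "u1 \<noteq> u2"
     "mob g0 (\<i> * complex_of_real u1) = z1" "mob g0 (\<i> * complex_of_real u2) = z2"
    using geod_two[OF assms] by blast
  define m where "m = sqrt (u1 * u2)"
  define \<sigma> where "\<sigma> = sqrt m"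
  have mp: "m > 0" using g0 by (simp add: m_def)
  have sp: "\<sigma> > 0" "\<sigma>^2 = m" using mp by (simp_all add: \<sigma>_def)
  have m2: "m^2 = u1 * u2" using g0 by (simp add: m_def)
  have sc: "complex_of_real \<sigma> * complex_of_real \<sigma> = complex_of_real m"
    using sp by (simp flip: of_real_mult add: power2_eq_square)
  have hi: "Im (\<i> * complex_of_real v) > 0" if "v > 0" for v using that by simp
  show ?thesis
  proof (cases "u1 < u2")
    case True
    define k where "k = mat2 \<sigma> 0 0 (1/\<sigma>)"
    have dk: "det k = 1" using sp by (simp add: k_def det2)
    have mk: "mob k (\<i> * complex_of_real v) = \<i> * complex_of_real (m * v)" for v
      using sp sc by (simp add: mob_def k_def field_simps power2_eq_square)
    have comp: "mob (g0 ** k) (\<i> * complex_of_real (exp s)) = mob g0 (\<i> * complex_of_real (m * exp s))" for s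
      using mob_comp[OF dk hi[of "exp s"]] mk by simp
    have "u1 < m" "m < u2"
    proof -
      have "u1^2 < m^2" "m^2 < u2^2" using m2 True g0 by (simp_all add: power2_eq_square)
      thus "u1 < m" "m < u2" using mp g0 by (simp_all add: power_less_imp_less_base)
    qed
    define l1 where "l1 = ln m - ln u1"
    define l2 where "l2 = ln u2 - ln m"
    have "l1 > 0" "l2 > 0" using \<open>u1 < m\<close> \<open>m < u2\<close> mp g0 by (simp_all add: l1_def l2_def)
    moreover have "m * exp (-l1) = u1" "m * exp l2 = u2"
      using mp g0 by (simp_all add: l1_def l2_def exp_diff exp_minus)
    moreover have "det (g0 ** k) = 1" using dk g0 by (simp add: det_mul)
    ultimately show ?thesis using comp g0 by metis
  next
    case False
    hence lt: "u2 < u1" using g0 by simp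
    define k where "k = mat2 0 (-\<sigma>) (1/\<sigma>) 0"
    have dk: "det k = 1" using sp by (simp add: k_def det2)
    have mk: "mob k (\<i> * complex_of_real v) = \<i> * complex_of_real (m / v)" if "v > 0" for v
      using sp sc that by (simp add: mob_def k_def field_simps power2_eq_square)
    have comp: "mob (g0 ** k) (\<i> * complex_of_real (exp s)) = mob g0 (\<i> * complex_of_real (m / exp s))" for s
      using mob_comp[OF dk hi[of "exp s"]] mk by simp
    have "u2 < m" "m < u1"
    proof -
      have "u2^2 < m^2" "m^2 < u1^2" using m2 lt g0 by (simp_all add: power2_eq_square)
      thus "u2 < m" "m < u1" using mp g0 by (simp_all add: power_less_imp_less_base)
    qed
    define l1 where "l1 = ln u1 - ln m"
    define l2 where "l2 = ln m - ln u2"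
    have "l1 > 0" "l2 > 0" using \<open>u2 < m\<close> \<open>m < u1\<close> mp g0 by (simp_all add: l1_def l2_def)
    moreover have "m / exp (-l1) = u1" "m / exp l2 = u2"
      using mp g0 by (simp_all add: l1_def l2_def exp_diff exp_minus)
    moreover have "det (g0 ** k) = 1" using dk g0 by (simp add: det_mul)
    ultimately show ?thesis using comp g0 by metis
  qed
qed

definition alpha :: "real \<Rightarrow> real \<Rightarrow> real \<Rightarrow> real^2^2 \<Rightarrow> real" where
  "alpha A B C g = A * (g$1$1)^2 + B * g$1$1 * g$2$1 + C * (g$2$1)^2"
definition beta :: "real \<Rightarrow> real \<Rightarrow> real \<Rightarrow> real^2^2 \<Rightarrow> real" where
  "beta A B C g = A * (g$1$2)^2 + B * g$1$2 * g$2$2 + C * (g$2$2)^2"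

lemma alpha_neg[simp]: "alpha A B C (-g) = alpha A B C g" by (simp add: alpha_def)
lemma beta_neg[simp]: "beta A B C (-g) = beta A B C g" by (simp add: beta_def)

lemma psi_ab:
  assumes "det g = 1" "u > 0"
  shows "psi A B C (mob g (\<i> * complex_of_real u)) = 0 \<longleftrightarrow> alpha A B C g * u^2 + beta A B C g = 0"
  using psi_mob_iu[OF assms, of A B C] denom_pos[OF assms]
  by (auto simp: alpha_def beta_def)

lemma cont_nhds: "continuous (at x) f \<Longrightarrow> (f \<longlongrightarrow> f x) (nhds x)"
  by (simp add: continuous_at tendsto_at_iff_tendsto_nhds)

lemma cross_lemma:
  fixes M :: "'a::metric_space \<Rightarrow> real^2^2"
  assumes cont: "\<And>i j. continuous (at v0) (\<lambda>v. M v $ i $ j)"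
    and dM: "\<And>v. det (M v) = 1"
    and g: "det g = 1" "M v0 = g \<or> M v0 = - g"
    and u0: "u0 > 0" "psi A B C (mob g (\<i> * complex_of_real u0)) = 0"
    and u': "u' > 0" "psi A B C (mob g (\<i> * complex_of_real u')) \<noteq> 0"
    and pos: "\<rho> > 0" "\<eta> > 0"
  shows "\<forall>\<^sub>F v in nhds v0. \<exists>\<tau>. \<bar>\<tau> - ln u0\<bar> < \<eta> \<and>
           psi A B C (mob (M v) (\<i> * complex_of_real (exp \<tau>))) = 0 \<and>
           cmod (mob (M v) (\<i> * complex_of_real (exp \<tau>)) - mob g (\<i> * complex_of_real u0)) < \<rho>"
proof -
  define al where "al = (\<lambda>v. alpha A B C (M v))"
  define be where "be = (\<lambda>v. beta A B C (M v))"
  have al0: "al v0 = alpha A B C g" "be v0 = beta A B C g" using g(2) by (auto simp: al_def be_def)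
  have mv0: "mob (M v0) z = mob g z" for z using g(2) mob_neg by metis
  have e0: "alpha A B C g * u0^2 + beta A B C g = 0" using psi_ab[OF g(1) u0(1)] u0(2) by simp
  have e1: "alpha A B C g * u'^2 + beta A B C g \<noteq> 0" using psi_ab[OF g(1) u'(1)] u'(2) by simp
  have anz: "alpha A B C g \<noteq> 0" using e0 e1 by auto
  have q0: "- be v0 / al v0 = u0^2" using e0 anz al0 by (simp add: field_simps)
  define tau where "tau = (\<lambda>v. ln (- be v / al v) / 2)"
  have tau0: "tau v0 = ln u0" using q0 u0 by (simp add: tau_def ln_realpow)
  define Q where "Q = (\<lambda>v. mob (M v) (\<i> * complex_of_real (exp (tau v))))"
  have Q0: "Q v0 = mob g (\<i> * complex_of_real u0)" using tau0 u0 mv0 by (simp add: Q_def)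
  have cal: "continuous (at v0) al" "continuous (at v0) be"
    unfolding al_def be_def alpha_def beta_def by (intro continuous_intros cont)+
  have ctau: "continuous (at v0) tau"
    unfolding tau_def using q0 u0 anz al0 by (intro continuous_intros cal) auto
  have cQ: "continuous (at v0) Q"
  proof -
    have dn: "complex_of_real (M v0 $ 2 $ 1) * (\<i> * complex_of_real (exp (tau v0))) + complex_of_real (M v0 $ 2 $ 2) \<noteq> 0"
      using denom_nz[OF dM, of "\<i> * complex_of_real (exp (tau v0))"] by simp
    show ?thesis unfolding Q_def mob_def
      by (intro continuous_intros cont ctau dn)
  qed
  have ev1: "\<forall>\<^sub>F v in nhds v0. - be v / al v > 0"
  proof -
    have "continuous (at v0) (\<lambda>v. - be v / al v)" using anz al0 by (intro continuous_intros cal) auto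
    hence "((\<lambda>v. - be v / al v) \<longlongrightarrow> - be v0 / al v0) (nhds v0)"
      by (rule cont_nhds)
    moreover have "0 < - be v0 / al v0" using q0 u0 by simp
    ultimately show ?thesis by (rule order_tendstoD(1))
  qed
  have ev2: "\<forall>\<^sub>F v in nhds v0. al v \<noteq> 0"
  proof -
    have "((\<lambda>v. \<bar>al v\<bar>) \<longlongrightarrow> \<bar>al v0\<bar>) (nhds v0)"
      using cal by (intro tendsto_rabs cont_nhds)
    from order_tendstoD(1)[OF this, of 0] have "\<forall>\<^sub>F v in nhds v0. \<bar>al v\<bar> > 0" using anz al0 by simp
    thus ?thesis by eventually_elim auto
  qed
  have ev3: "\<forall>\<^sub>F v in nhds v0. \<bar>tau v - ln u0\<bar> < \<eta>"
  proof -
    have "((\<lambda>v. \<bar>tau v - ln u0\<bar>) \<longlongrightarrow> \<bar>tau v0 - ln u0\<bar>) (nhds v0)"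
      using ctau by (intro tendsto_intros cont_nhds)
    from order_tendstoD(2)[OF this, of \<eta>] show ?thesis using tau0 pos by simp
  qed
  have ev4: "\<forall>\<^sub>F v in nhds v0. cmod (Q v - Q v0) < \<rho>"
  proof -
    have "((\<lambda>v. cmod (Q v - Q v0)) \<longlongrightarrow> cmod (Q v0 - Q v0)) (nhds v0)"
      using cQ by (intro tendsto_intros cont_nhds)
    from order_tendstoD(2)[OF this, of \<rho>] show ?thesis using pos by simp
  qed
  show ?thesis
  using ev1 ev2 ev3 ev4
  proof eventually_elim
    case (elim v)
    have ex: "(exp (tau v))^2 = - be v / al v"
      using elim(1) by (simp add: tau_def flip: exp_of_nat_mult)
    have "alpha A B C (M v) * (exp (tau v))^2 + beta A B C (M v) = 0"
      using ex elim(2) by (simp add: al_def be_def)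
    hence "psi A B C (mob (M v) (\<i> * complex_of_real (exp (tau v)))) = 0"
      using psi_ab[OF dM, of "exp (tau v)"] by simp
    thus ?case using elim(3,4) Q0 by (intro exI[of _ "tau v"]) (auto simp: Q_def)
  qed
qed

lemma haar_pos_of_ball:
  assumes e: "\<epsilon> > 0" and th: "0 \<le> \<theta>0" "\<theta>0 < pi"
    and S: "\<And>v. dist v (x0,t0,\<theta>0) < \<epsilon> \<Longrightarrow> iwasawa (fst v) (fst (snd v)) (snd (snd v)) \<in> S"
  shows "haar_G S > 0"
proof -
  define \<delta> where "\<delta> = min (\<epsilon>/2) (min ((pi - \<theta>0)/2) 1)"
  have dp: "\<delta> > 0" "\<delta> \<le> \<epsilon>/2" "\<delta> \<le> (pi - \<theta>0)/2" "\<delta> \<le> 1" using e th unfolding \<delta>_def by (auto simp: min_def)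
  define v1 where "v1 = (x0, t0, \<theta>0 + \<delta>/2)"
  define B where "B = ball v1 (\<delta>/2)"
  define Sset where "Sset = {v :: real \<times> real \<times> real. snd (snd v) \<in> {0..<pi} \<and>
        (iwasawa (fst v) (fst (snd v)) (snd (snd v)) \<in> S \<or>
         - iwasawa (fst v) (fst (snd v)) (snd (snd v)) \<in> S)}"
  have sub: "v \<in> Sset \<and> exp (- fst (snd v)) \<ge> exp (- t0 - 1)" if "v \<in> B" for v
  proof -
    have d1: "dist v v1 < \<delta>/2" using that by (simp add: B_def dist_commute)
    have "dist v1 (x0,t0,\<theta>0) = \<delta>/2" using dp by (simp add: v1_def dist_prod_def dist_real_def)
    hence "dist v (x0,t0,\<theta>0) < \<epsilon>" using d1 dist_triangle[of v "(x0,t0,\<theta>0)" v1] dp by linarith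
    hence "iwasawa (fst v) (fst (snd v)) (snd (snd v)) \<in> S" by (rule S)
    moreover have "dist (snd (snd v)) (snd (snd v1)) < \<delta>/2"
      using d1 dist_snd_le[of v v1] dist_snd_le[of "snd v" "snd v1"] by linarith
    hence "\<bar>snd (snd v) - (\<theta>0 + \<delta>/2)\<bar> < \<delta>/2" by (simp add: v1_def dist_real_def)
    hence "\<theta>0 < snd (snd v) \<and> snd (snd v) < \<theta>0 + \<delta>" by (simp only: abs_less_iff) linarith
    hence "snd (snd v) \<in> {0..<pi}" using dp th by auto
    moreover have "dist (fst (snd v)) (fst (snd v1)) < \<delta>/2"
      using d1 dist_snd_le[of v v1] dist_fst_le[of "snd v" "snd v1"] by linarith
    hence "\<bar>fst (snd v) - t0\<bar> < \<delta>/2" by (simp add: v1_def dist_real_def)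
    hence "- fst (snd v) \<ge> - t0 - 1" using dp by (simp only: abs_less_iff) linarith
    ultimately show ?thesis by (simp add: Sset_def)
  qed
  have le: "(\<integral>\<^sup>+ v. ennreal (exp (- t0 - 1)) * indicator B v \<partial>lborel) \<le>
        (\<integral>\<^sup>+ v. ennreal (exp (- fst (snd v))) * indicator Sset v \<partial>lborel)"
  proof (rule nn_integral_mono)
    fix v show "ennreal (exp (- t0 - 1)) * indicator B v \<le> ennreal (exp (- fst (snd v))) * indicator Sset v"
      using sub[of v] by (cases "v \<in> B") (auto simp: indicator_def)
  qed
  have eq1: "(\<integral>\<^sup>+ v. ennreal (exp (- t0 - 1)) * indicator B v \<partial>lborel) = ennreal (exp (- t0 - 1)) * emeasure lborel B"
    by (rule nn_integral_cmult_indicator) (simp add: B_def)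
  have eq2: "emeasure lborel B = ennreal (unit_ball_vol (DIM(real \<times> real \<times> real)) * (\<delta>/2) ^ DIM(real \<times> real \<times> real))"
    unfolding B_def using dp by (intro emeasure_ball) simp
  have p: "ennreal (exp (- t0 - 1)) * ennreal (unit_ball_vol (DIM(real \<times> real \<times> real)) * (\<delta>/2) ^ DIM(real \<times> real \<times> real)) > 0"
    using dp by (simp add: ennreal_zero_less_mult_iff)
  have h: "haar_G S = (\<integral>\<^sup>+ v. ennreal (exp (- fst (snd v))) * indicator Sset v \<partial>lborel)"
    by (simp add: haar_G_def Sset_def)
  show ?thesis unfolding h using p le unfolding eq1 eq2 by (rule order.strict_trans2)
qed

lemma iwasawa_cont:
  fixes v0 :: "real \<times> real \<times> real"
  shows "continuous (at v0) (\<lambda>v. iwasawa (fst v) (fst (snd v)) (snd (snd v)) $ i $ j)"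
proof -
  have "i = 1 \<or> i = 2" "j = 1 \<or> j = 2" using exhaust_2 by auto
  thus ?thesis by (elim disjE) (simp_all add: iwasawa_entries; intro continuous_intros)+
qed

lemma main_pos:
  assumes z: "Im z1 > 0" "Im z2 > 0"
    and p1: "psi A1 B1 C1 z1 = 0" "psi A1 B1 C1 z2 \<noteq> 0"
    and p2: "psi A2 B2 C2 z2 = 0" "psi A2 B2 C2 z1 \<noteq> 0"
    and r: "\<rho>1 > 0" "\<rho>2 > 0"
    and I: "\<And>z. Im z > 0 \<Longrightarrow> psi A1 B1 C1 z = 0 \<Longrightarrow> cmod (z - z1) < \<rho>1 \<Longrightarrow> z \<in> I"
    and J: "\<And>z. Im z > 0 \<Longrightarrow> psi A2 B2 C2 z = 0 \<Longrightarrow> cmod (z - z2) < \<rho>2 \<Longrightarrow> z \<in> J"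
  shows "haar_G (geod_set I J) > 0"
proof -
  have "z1 \<noteq> z2" using p1 by auto
  then obtain g l1 l2 where g: "det g = 1" "l1 > 0" "l2 > 0"
     "mob g (\<i> * complex_of_real (exp (-l1))) = z1" "mob g (\<i> * complex_of_real (exp l2)) = z2"
    using geod_oriented[OF z] by blast
  obtain x0 t0 th0 where th: "0 \<le> th0" "th0 < pi" "iwasawa x0 t0 th0 = g \<or> iwasawa x0 t0 th0 = - g"
    using iwasawa_exists_pi[OF g(1)] by blast
  define M where "M = (\<lambda>v::real\<times>real\<times>real. iwasawa (fst v) (fst (snd v)) (snd (snd v)))"
  define v0 where "v0 = (x0, t0, th0)"
  have cont: "\<And>i j. continuous (at v0) (\<lambda>v. M v $ i $ j)" unfolding M_def by (rule iwasawa_cont)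
  have dM: "\<And>v. det (M v) = 1" by (simp add: M_def det_iwasawa)
  have Mv0: "M v0 = g \<or> M v0 = - g" using th by (simp add: M_def v0_def)
  have E1: "\<forall>\<^sub>F v in nhds v0. \<exists>\<tau>. \<bar>\<tau> - ln (exp (-l1))\<bar> < l1 \<and>
           psi A1 B1 C1 (mob (M v) (\<i> * complex_of_real (exp \<tau>))) = 0 \<and>
           cmod (mob (M v) (\<i> * complex_of_real (exp \<tau>)) - mob g (\<i> * complex_of_real (exp (-l1)))) < \<rho>1"
    by (rule cross_lemma[OF cont dM g(1) Mv0, of "exp (-l1)" A1 B1 C1 "exp l2" \<rho>1 l1])
       (use g p1 r in auto)
  have E2: "\<forall>\<^sub>F v in nhds v0. \<exists>\<tau>. \<bar>\<tau> - ln (exp l2)\<bar> < l2 \<and>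
           psi A2 B2 C2 (mob (M v) (\<i> * complex_of_real (exp \<tau>))) = 0 \<and>
           cmod (mob (M v) (\<i> * complex_of_real (exp \<tau>)) - mob g (\<i> * complex_of_real (exp l2))) < \<rho>2"
    by (rule cross_lemma[OF cont dM g(1) Mv0, of "exp l2" A2 B2 C2 "exp (-l1)" \<rho>2 l2])
       (use g p2 r in auto)
  have "\<forall>\<^sub>F v in nhds v0. M v \<in> geod_set I J"
    using E1 E2
  proof eventually_elim
    case (elim v)
    from elim(1) obtain \<tau>1 where t1: "\<bar>\<tau>1 + l1\<bar> < l1" "psi A1 B1 C1 (mob (M v) (\<i> * complex_of_real (exp \<tau>1))) = 0"
       "cmod (mob (M v) (\<i> * complex_of_real (exp \<tau>1)) - z1) < \<rho>1" using g by auto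
    from elim(2) obtain \<tau>2 where t2: "\<bar>\<tau>2 - l2\<bar> < l2" "psi A2 B2 C2 (mob (M v) (\<i> * complex_of_real (exp \<tau>2))) = 0"
       "cmod (mob (M v) (\<i> * complex_of_real (exp \<tau>2)) - z2) < \<rho>2" using g by auto
    have "pmap (M v ** a_t (- (- \<tau>1))) \<in> I"
      unfolding pmap_at using t1 by (intro I mob_hplane dM) auto
    moreover have "pmap (M v ** a_t \<tau>2) \<in> J"
      unfolding pmap_at using t2 by (intro J mob_hplane dM) auto
    moreover have "- \<tau>1 > 0" "\<tau>2 > 0" using t1(1) t2(1) by (simp_all add: abs_less_iff)
    ultimately show ?case unfolding geod_set_def SL2_def using dM by blast
  qed
  then obtain \<epsilon> where e: "\<epsilon> > 0" "\<And>v. dist v v0 < \<epsilon> \<Longrightarrow> M v \<in> geod_set I J"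
    unfolding eventually_nhds_metric by blast
  show ?thesis
    by (rule haar_pos_of_ball[OF e(1) th(1,2)]) (use e(2) in \<open>auto simp: M_def v0_def\<close>)
qed

lemma line_psi:
  assumes "geodesic_line L"
  shows "\<exists>A B C. L = {z. Im z > 0 \<and> psi A B C z = 0}"
  using assms unfolding geodesic_line_def
proof (elim disjE exE conjE)
  fix c assume "L = {z. 0 < Im z \<and> Re z = c}"
  thus ?thesis by (intro exI[of _ 0] exI[of _ 1] exI[of _ "-c"]) (auto simp: psi_def)
next
  fix c r assume L: "L = {z. 0 < Im z \<and> cmod (z - complex_of_real c) = r}" "r > 0"
  have "cmod (z - complex_of_real c) = r \<longleftrightarrow> psi 1 (-2*c) (c^2 - r^2) z = 0" for z
  proof -
    have "cmod (z - complex_of_real c) = r \<longleftrightarrow> (cmod (z - complex_of_real c))^2 = r^2"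
      using L(2) by (metis abs_of_pos norm_ge_zero power2_eq_iff_nonneg order_less_imp_le)
    also have "(cmod (z - complex_of_real c))^2 = (cmod z)^2 - 2*c*Re z + c^2"
      unfolding cmod_power2 by (simp add: power2_eq_square algebra_simps)
    finally show ?thesis by (simp add: psi_def algebra_simps)
  qed
  thus ?thesis using L by blast
qed

lemma line_sub: "geodesic_line L \<Longrightarrow> L \<subseteq> hplane"
  unfolding geodesic_line_def hplane_def by auto

lemma line_closedin:
  assumes "geodesic_line L"
  shows "closedin (top_of_set hplane) L"
proof -
  obtain A B C where L: "L = {z. Im z > 0 \<and> psi A B C z = 0}" using line_psi[OF assms] by blast
  have "closed {z. psi A B C z = 0}"
    unfolding psi_def by (intro closed_Collect_eq continuous_intros)
  moreover have "L = hplane \<inter> {z. psi A B C z = 0}" using L by (auto simp: hplane_def)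
  ultimately show ?thesis by (simp add: closedin_closed_Int)
qed

lemma two_points_line:
  assumes "geodesic_line L1" "geodesic_line L2" "a \<in> L1" "a \<in> L2" "b \<in> L1" "b \<in> L2" "a \<noteq> b"
  shows "L1 = L2"
proof -
  have ab: "Re a \<noteq> Re b \<or> Im a \<noteq> Im b" using assms(7) complex_eqI by blast
  have pa: "Im a > 0" "Im b > 0" using assms line_sub hplane_def by auto
  have vert: "Re a = Re b" if "L = {z. 0 < Im z \<and> Re z = c}" "a \<in> L" "b \<in> L" for L c
    using that by auto
  have circ: "(Re a - c)^2 + (Im a)^2 = r^2 \<and> (Re b - c)^2 + (Im b)^2 = r^2"
    if "L = {z. 0 < Im z \<and> cmod (z - complex_of_real c) = r}" "a \<in> L" "b \<in> L" for L c r
  proof -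
    have "cmod (a - complex_of_real c) = r" "cmod (b - complex_of_real c) = r" using that by auto
    hence "(cmod (a - complex_of_real c))^2 = r^2" "(cmod (b - complex_of_real c))^2 = r^2" by auto
    thus ?thesis by (simp add: cmod_power2)
  qed
  have circ_nv: "Re a \<noteq> Re b" if "(Re a - c)^2 + (Im a)^2 = r^2" "(Re b - c)^2 + (Im b)^2 = r^2" for c r
  proof
    assume "Re a = Re b"
    hence "(Im a)^2 = (Im b)^2" using that by simp
    hence "Im a = Im b" using pa by (simp add: power2_eq_iff_nonneg)
    with \<open>Re a = Re b\<close> ab show False by simp
  qed
  from assms(1,2) show ?thesis unfolding geodesic_line_def
  proof (elim disjE exE conjE)
    fix c1 c2 assume L: "L1 = {z. 0 < Im z \<and> Re z = c1}" "L2 = {z. 0 < Im z \<and> Re z = c2}"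
    hence "c1 = c2" using assms(3,4) by auto
    thus ?thesis using L by simp
  next
    fix c1 c2 r2 assume L: "L1 = {z. 0 < Im z \<and> Re z = c1}" "L2 = {z. 0 < Im z \<and> cmod (z - complex_of_real c2) = r2}"
    thus ?thesis using vert[OF L(1)] circ[OF L(2)] circ_nv assms by blast
  next
    fix c1 r1 c2 assume L: "L1 = {z. 0 < Im z \<and> cmod (z - complex_of_real c1) = r1}" "L2 = {z. 0 < Im z \<and> Re z = c2}"
    thus ?thesis using vert[OF L(2)] circ[OF L(1)] circ_nv assms by blast
  next
    fix c1 r1 c2 r2 assume L: "L1 = {z. 0 < Im z \<and> cmod (z - complex_of_real c1) = r1}" "r1 > 0"
       "L2 = {z. 0 < Im z \<and> cmod (z - complex_of_real c2) = r2}" "r2 > 0"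
    have e1: "(Re a - c1)^2 + (Im a)^2 = r1^2" "(Re b - c1)^2 + (Im b)^2 = r1^2" using circ[OF L(1)] assms by auto
    have e2: "(Re a - c2)^2 + (Im a)^2 = r2^2" "(Re b - c2)^2 + (Im b)^2 = r2^2" using circ[OF L(3)] assms by auto
    have nv: "Re a \<noteq> Re b" using circ_nv e1 by blast
    have "(Re a - Re b) * (Re a + Re b - 2*c1) = (Im b)^2 - (Im a)^2"
      using e1 by (simp add: power2_eq_square algebra_simps)
    moreover have "(Re a - Re b) * (Re a + Re b - 2*c2) = (Im b)^2 - (Im a)^2"
      using e2 by (simp add: power2_eq_square algebra_simps)
    ultimately have "(Re a - Re b) * (Re a + Re b - 2*c1) = (Re a - Re b) * (Re a + Re b - 2*c2)" by simp
    hence "c1 = c2" using nv by simp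
    hence "r1^2 = r2^2" using e1 e2 by simp
    hence "r1 = r2" using L by (simp add: power2_eq_iff_nonneg)
    thus ?thesis using L \<open>c1 = c2\<close> by simp
  qed
qed

lemma tanh_artanh_real:
  fixes t :: real
  assumes "-1 < t" "t < 1"
  shows "tanh (artanh t) = t"
proof -
  have q: "(1+t)/(1-t) > 0" using assms by simp
  have E: "exp (- 2 * artanh t) = (1-t)/(1+t)"
    using q assms by (simp add: artanh_def exp_minus)
  have "tanh (artanh t) = (1 - exp (- 2 * artanh t)) / (1 + exp (- 2 * artanh t))"
    by (rule tanh_real_altdef)
  also have "\<dots> = (1 - (1-t)/(1+t)) / (1 + (1-t)/(1+t))" by (simp only: E)
  also have "\<dots> = t" using assms by (simp add: field_simps)
  finally show ?thesis .
qed

lemma tanh_cosh_sq: "(tanh s)^2 + (1 / cosh s)^2 = (1::real)"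
proof -
  have "cosh s ^ 2 = sinh s ^ 2 + 1" by (rule cosh_square_eq)
  moreover have "cosh s \<noteq> 0" using cosh_real_pos[of s] by linarith
  moreover have "(sinh s)^2 + 1 \<noteq> 0" by (metis add_nonneg_pos zero_le_power2 zero_less_one less_irrefl)
  ultimately show ?thesis by (simp add: tanh_def power_divide add_divide_distrib[symmetric])
qed

lemma line_param:
  assumes "geodesic_line L"
  shows "\<exists>h \<phi>. continuous_on UNIV h \<and> (\<forall>s. h s \<in> L) \<and> continuous_on L \<phi> \<and>
              (\<forall>z\<in>L. h (\<phi> z) = z) \<and> (\<forall>s. \<phi> (h s) = (s::real))"
  using assms unfolding geodesic_line_def
proof (elim disjE exE conjE)
  fix c assume L: "L = {z. 0 < Im z \<and> Re z = c}"
  define h where "h = (\<lambda>s. complex_of_real c + \<i> * complex_of_real (exp s))"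
  define \<phi> where "\<phi> = (\<lambda>z. ln (Im z))"
  have "continuous_on UNIV h" unfolding h_def by (intro continuous_intros)
  moreover have "\<forall>s. h s \<in> L" using L by (simp add: h_def)
  moreover have "continuous_on L \<phi>" unfolding \<phi>_def using L by (intro continuous_intros) auto
  moreover have "\<forall>z\<in>L. h (\<phi> z) = z" using L by (auto simp: h_def \<phi>_def complex_eq_iff)
  moreover have "\<forall>s. \<phi> (h s) = s" by (simp add: h_def \<phi>_def)
  ultimately show ?thesis by blast
next
  fix c r assume L: "L = {z. 0 < Im z \<and> cmod (z - complex_of_real c) = r}" "r > 0"
  define h where "h = (\<lambda>s. complex_of_real (c + r * tanh s) + \<i> * complex_of_real (r / cosh s))"
  define \<phi> where "\<phi> = (\<lambda>z. artanh ((Re z - c) / r))"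
  have mem: "z \<in> L \<longleftrightarrow> Im z > 0 \<and> (Re z - c)^2 + (Im z)^2 = r^2" for z
  proof -
    have "cmod (z - complex_of_real c) = r \<longleftrightarrow> (cmod (z - complex_of_real c))^2 = r^2"
      using L(2) by (metis abs_of_pos norm_ge_zero power2_eq_iff_nonneg order_less_imp_le)
    thus ?thesis using L by (simp add: cmod_power2)
  qed
  have inL: "(Re z - c)/r \<in> {-1<..<1}" if "z \<in> L" for z
  proof -
    have "(Re z - c)^2 < r^2" using mem[of z] that by (auto simp: add_pos_pos)
      (smt (verit) zero_less_power2)
    hence "\<bar>Re z - c\<bar> < r" using L(2) by (metis abs_of_pos power2_abs power_less_imp_less_base abs_ge_zero)
    thus ?thesis using L(2) by (auto simp: abs_less_iff field_simps)
  qed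
  have hL: "h s \<in> L" for s
  proof -
    have "(r * tanh s)^2 + (r / cosh s)^2 = r^2 * ((tanh s)^2 + (1/cosh s)^2)"
      by (simp add: power_mult_distrib power_divide algebra_simps)
    thus ?thesis unfolding mem using L(2) tanh_cosh_sq[of s] by (simp add: h_def)
  qed
  have "continuous_on UNIV h" unfolding h_def tanh_def by (intro continuous_intros) auto
  moreover have "continuous_on L \<phi>"
  proof -
    have "continuous_on L (\<lambda>z. (Re z - c)/r)" using L(2) by (intro continuous_intros) auto
    moreover have "(\<lambda>z. (Re z - c) / r) ` L \<subseteq> {- 1<..<1}" using inL by blast
    ultimately show ?thesis unfolding \<phi>_def by (rule continuous_on_compose2[OF continuous_on_artanh[OF order.refl]])
  qed
  moreover have "\<forall>z\<in>L. h (\<phi> z) = z"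
  proof
    fix z assume z: "z \<in> L"
    have re: "Re (h (\<phi> z)) = Re z"
      using inL[OF z] L(2) by (simp add: h_def \<phi>_def tanh_artanh_real)
    have A: "(Re z - c)^2 + (Im (h (\<phi> z)))^2 = r^2" using mem[of "h (\<phi> z)"] hL re by metis
    have B: "(Re z - c)^2 + (Im z)^2 = r^2" using mem[of z] z by blast
    have "(Im (h (\<phi> z)))^2 = (Im z)^2" using A B by linarith
    moreover have "Im (h (\<phi> z)) \<ge> 0" "Im z \<ge> 0" using mem[of z] mem[of "h (\<phi> z)"] z hL by auto
    ultimately have "Im (h (\<phi> z)) = Im z" using power2_eq_iff_nonneg by blast
    thus "h (\<phi> z) = z" using re complex_eqI by blast
  qed
  moreover have "\<forall>s. \<phi> (h s) = s" using L(2) by (simp add: h_def \<phi>_def artanh_tanh_real)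
  ultimately show ?thesis using hL by blast
qed

lemma line_near_point:
  assumes "geodesic_line L" "w \<in> L" "r > 0"
  shows "\<exists>z\<in>L. z \<noteq> w \<and> cmod (z - w) < r"
proof -
  obtain h \<phi> where hp: "continuous_on UNIV h" "\<forall>s. h s \<in> L" "continuous_on L \<phi>"
    "\<forall>z\<in>L. h (\<phi> z) = z" "\<forall>s. \<phi> (h s) = (s::real)" using line_param[OF assms(1)] by blast
  have "isCont h (\<phi> w)" using hp(1) by (simp add: continuous_on_eq_continuous_at)
  then obtain \<delta> where d: "\<delta> > 0" "\<And>s. dist s (\<phi> w) < \<delta> \<Longrightarrow> dist (h s) (h (\<phi> w)) < r"
    using assms(3) unfolding continuous_at_eps_delta by blast
  define z where "z = h (\<phi> w + \<delta>/2)"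
  have "z \<in> L" using hp by (simp add: z_def)
  moreover have "z \<noteq> w"
  proof
    assume "z = w"
    hence "\<phi> z = \<phi> w" by simp
    thus False using hp(5) d(1) by (simp add: z_def)
  qed
  moreover have "cmod (z - w) < r"
    using d(2)[of "\<phi> w + \<delta>/2"] d(1) hp(4) assms(2) by (simp add: z_def dist_norm)
  ultimately show ?thesis by blast
qed

lemma line_point_off:
  assumes "geodesic_line L" "geodesic_line L2" "L \<noteq> L2" "w \<in> L" "r > 0"
  shows "\<exists>z\<in>L. z \<notin> L2 \<and> cmod (z - w) < r"
proof -
  obtain z where z: "z \<in> L" "z \<noteq> w" "cmod (z - w) < r" using line_near_point[OF assms(1,4,5)] by blast
  show ?thesis
  proof (cases "w \<in> L2")
    case True
    hence "z \<notin> L2" using two_points_line[OF assms(1,2) assms(4) True z(1) _ z(2)[symmetric]] assms(3) by blast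
    thus ?thesis using z by blast
  next
    case False thus ?thesis using assms by (intro bexI[of _ w]) auto
  qed
qed

lemma density:
  assumes Ss: "finite Ss" "\<forall>S\<in>Ss. geodesic_side S" "\<Union>Ss = H"
    and U: "openin (top_of_set H) U" "U \<noteq> {}"
  shows "\<exists>w L r. geodesic_line L \<and> w \<in> L \<and> w \<in> U \<and> r > 0 \<and>
           (\<forall>z. z \<in> L \<and> cmod (z - w) < r \<longrightarrow> z \<in> U)"
proof -
  obtain z where zU: "z \<in> U" using U(2) by blast
  obtain Op where Op: "open Op" "U = H \<inter> Op" using U(1) by (auto simp: openin_open)
  have "z \<in> H" using zU Op by auto
  then obtain S0 where S0: "S0 \<in> Ss" "z \<in> S0" using Ss(3) by blast
  have gs: "geodesic_side S0" using Ss(2) S0(1) by blast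
  then obtain L where L: "geodesic_line L" "S0 \<subseteq> L" and cS: "connected S0"
    and two: "\<exists>a b. a \<in> S0 \<and> b \<in> S0 \<and> a \<noteq> b" unfolding geodesic_side_def by blast
  obtain z' where z': "z' \<in> S0" "z' \<noteq> z" using two by blast
  have S0H: "S0 \<subseteq> H" using S0 Ss(3) by blast
  obtain h \<phi> where hp: "continuous_on UNIV h" "\<forall>s. h s \<in> L" "continuous_on L \<phi>"
    "\<forall>z\<in>L. h (\<phi> z) = z" "\<forall>s. \<phi> (h s) = (s::real)" using line_param[OF L(1)] by blast
  define T where "T = \<phi> ` S0"
  have cT: "connected T" unfolding T_def
    using connected_continuous_image[OF continuous_on_subset[OF hp(3) L(2)] cS] .
  define s0 where "s0 = \<phi> z"
  define s1 where "s1 = \<phi> z'"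
  have s01: "s0 \<in> T" "s1 \<in> T" using S0 z' by (auto simp: T_def s0_def s1_def)
  have ne: "s0 \<noteq> s1"
  proof
    assume "s0 = s1"
    hence "h s0 = h s1" by simp
    moreover have "h s0 = z" "h s1 = z'" using hp(4) L(2) S0(2) z'(1) by (auto simp: s0_def s1_def)
    ultimately show False using z'(2) by simp
  qed
  have hz: "h s0 = z" using hp(4) L(2) S0(2) by (auto simp: s0_def)
  have "isCont h s0" using hp(1) by (simp add: continuous_on_eq_continuous_at)
  hence "\<forall>\<^sub>F s in nhds s0. h s \<in> Op" using Op(1) zU Op(2) hz
    by (metis Int_iff continuous_at_imp_continuous_at_within continuous_within_topological eventually_nhds isCont_def tendsto_def tendsto_at_iff_tendsto_nhds)
  then obtain \<eta> where eta: "\<eta> > 0" "\<And>s. dist s s0 < \<eta> \<Longrightarrow> h s \<in> Op"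
    unfolding eventually_nhds_metric by blast
  define m where "m = min \<eta> \<bar>s1 - s0\<bar>"
  have mp: "m > 0" using eta ne by (simp add: m_def)
  define ss where "ss = (if s0 < s1 then s0 + m/2 else s0 - m/2)"
  have good: "h s \<in> U" if "\<bar>s - ss\<bar> < m/2" for s
  proof -
    have sseq: "ss = s0 + m/2 \<or> ss = s0 - m/2" by (simp add: ss_def)
    have "\<bar>s - s0\<bar> < m" using that sseq by (simp only: abs_less_iff) linarith
    hence "h s \<in> Op" using eta(2)[of s] by (simp add: dist_real_def m_def)
    moreover have "s \<in> T"
    proof (cases "s0 < s1")
      case True
      hence "ss = s0 + m/2" "m \<le> s1 - s0" by (simp_all add: ss_def m_def)
      hence "s \<in> {s0..s1}" using that by (simp only: abs_less_iff atLeastAtMost_iff) linarith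
      thus ?thesis using connected_contains_Icc[OF cT s01] by blast
    next
      case False
      hence "ss = s0 - m/2" "m \<le> s0 - s1" using ne by (simp_all add: ss_def m_def)
      hence "s \<in> {s1..s0}" using that by (simp only: abs_less_iff atLeastAtMost_iff) linarith
      thus ?thesis using connected_contains_Icc[OF cT s01(2,1)] by blast
    qed
    then obtain y where "y \<in> S0" "s = \<phi> y" by (auto simp: T_def)
    hence "h s \<in> S0" using hp(4) L(2) by auto
    ultimately show ?thesis using Op(2) S0H by auto
  qed
  define w where "w = h ss"
  have wU: "w \<in> U" using good[of ss] mp by (simp add: w_def)
  have wL: "w \<in> L" using hp(2) by (simp add: w_def)
  have "continuous (at w within L) \<phi>" using hp(3) wL by (simp add: continuous_on_eq_continuous_within)
  then obtain r where r: "r > 0" "\<And>y. y \<in> L \<Longrightarrow> dist y w < r \<Longrightarrow> dist (\<phi> y) (\<phi> w) < m/2"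
    using mp unfolding continuous_within_eps_delta by (metis half_gt_zero)
  have "\<forall>y. y \<in> L \<and> cmod (y - w) < r \<longrightarrow> y \<in> U"
  proof (intro allI impI)
    fix y assume y: "y \<in> L \<and> cmod (y - w) < r"
    hence "\<bar>\<phi> y - ss\<bar> < m/2" using r(2)[of y] hp(5) by (simp add: dist_norm w_def dist_real_def)
    hence "h (\<phi> y) \<in> U" by (rule good)
    thus "y \<in> U" using hp(4) y by auto
  qed
  thus ?thesis using L(1) wL wU r(1) by blast
qed

definition midx :: "complex \<Rightarrow> complex \<Rightarrow> real" where
  "midx p w = (Im p * Re w + Im w * Re p) / (Im p + Im w)"
definition midy2 :: "complex \<Rightarrow> complex \<Rightarrow> real" where
  "midy2 p w = Im p * Im w - (Re p - midx p w) * (Re w - midx p w)"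
definition mid :: "complex \<Rightarrow> complex \<Rightarrow> complex" where
  "mid p w = Complex (midx p w) (sqrt (midy2 p w))"
definition hrefl :: "complex \<Rightarrow> complex \<Rightarrow> complex" where
  "hrefl m z = complex_of_real (Re m) - complex_of_real ((Im m)^2) / (z - complex_of_real (Re m))"

lemma midy2_pos:
  assumes "Im p > 0" "Im w > 0"
  shows "midy2 p w > 0"
proof -
  define P where "P = Im p + Im w"
  have P: "P > 0" using assms by (simp add: P_def)
  have "(Re p - midx p w) * (Re w - midx p w) = - (Im p * Im w) * ((Re p - Re w) / P)^2"
    using P unfolding midx_def P_def[symmetric]
    by (simp add: field_simps power2_eq_square) (simp add: P_def algebra_simps)
  hence "midy2 p w = Im p * Im w * (1 + ((Re p - Re w) / P)^2)"
    by (simp add: midy2_def algebra_simps)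
  thus ?thesis using assms by (simp add: add_pos_nonneg)
qed

lemma mid_Im: "Im p > 0 \<Longrightarrow> Im w > 0 \<Longrightarrow> Im (mid p w) > 0"
  using midy2_pos by (simp add: mid_def)

lemma refl_mid:
  assumes "Im p > 0" "Im w > 0"
  shows "hrefl (mid p w) w = p"
proof -
  define x where "x = midx p w"
  define y2 where "y2 = midy2 p w"
  have y2: "y2 > 0" using midy2_pos[OF assms] by (simp add: y2_def)
  have ms: "Re (mid p w) = x" "(Im (mid p w))^2 = y2" using y2 by (simp_all add: mid_def x_def y2_def)
  have nz: "w - complex_of_real x \<noteq> 0"
  proof
    assume "w - complex_of_real x = 0"
    hence "Im (w - complex_of_real x) = 0" by simp
    thus False using assms by simp
  qed
  have P: "Im p + Im w > 0" using assms by simp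
  have key: "(p - complex_of_real x) * (w - complex_of_real x) = - complex_of_real y2"
  proof (rule complex_eqI)
    show "Re ((p - complex_of_real x) * (w - complex_of_real x)) = Re (- complex_of_real y2)"
      by (simp add: y2_def midy2_def x_def algebra_simps)
    have "x * (Im p + Im w) = Im p * Re w + Im w * Re p" using P by (simp add: x_def midx_def)
    thus "Im ((p - complex_of_real x) * (w - complex_of_real x)) = Im (- complex_of_real y2)"
      by (simp add: algebra_simps)
  qed
  have "hrefl (mid p w) w = complex_of_real x - complex_of_real y2 / (w - complex_of_real x)"
    by (simp add: hrefl_def ms)
  also have "\<dots> = complex_of_real x + (p - complex_of_real x)"
    using key nz by (simp add: field_simps)
  finally show ?thesis by simp
qed

lemma psi_mid:
  assumes "Im p > 0" "Im w > 0" "psi A B C p = 0" "psi A B C w = 0"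
  shows "psi A B C (mid p w) = 0"
proof -
  define x where "x = midx p w"
  define y2 where "y2 = midy2 p w"
  define P where "P = Im p + Im w"
  have P: "P > 0" using assms by (simp add: P_def)
  have y2: "y2 > 0" using midy2_pos[OF assms(1,2)] by (simp add: y2_def)
  have c: "(cmod (mid p w))^2 = x^2 + y2" "Re (mid p w) = x" using y2
    by (simp_all add: mid_def x_def y2_def cmod_power2)
  have Px: "P * x = Im p * Re w + Im w * Re p" using P by (simp add: x_def midx_def P_def)
  have "P * (x^2 + y2) = P * (Im p * Im w - Re p * Re w) + (P * x) * (Re p + Re w)"
    by (simp add: y2_def midy2_def x_def[symmetric] algebra_simps power2_eq_square)
  also have "\<dots> = Im p * ((Re w)^2 + (Im w)^2) + Im w * ((Re p)^2 + (Im p)^2)"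
    unfolding Px by (simp add: P_def algebra_simps power2_eq_square)
  finally have e: "P * (x^2 + y2) = Im p * (cmod w)^2 + Im w * (cmod p)^2"
    by (simp add: cmod_power2)
  have "P * psi A B C (mid p w) = A * (P * (x^2 + y2)) + B * (P * x) + C * P"
    unfolding psi_def c by (simp add: algebra_simps)
  also have "\<dots> = Im p * psi A B C w + Im w * psi A B C p"
    unfolding e Px by (simp add: psi_def P_def algebra_simps)
  also have "\<dots> = 0" using assms by simp
  finally show ?thesis using P by simp
qed

lemma refl_Im:
  assumes "Im m > 0" "Im z > 0"
  shows "Im (hrefl m z) > 0"
proof -
  have nz: "z - complex_of_real (Re m) \<noteq> 0"
  proof
    assume "z - complex_of_real (Re m) = 0"
    hence "Im (z - complex_of_real (Re m)) = 0" by simp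
    thus False using assms by simp
  qed
  hence "(Re z - Re m)^2 + (Im z)^2 > 0" using assms by (simp add: add_nonneg_pos)
  thus ?thesis using assms by (simp add: hrefl_def Im_divide power2_eq_square)
qed

lemma refl_cont:
  assumes "Im z > 0"
  shows "isCont (hrefl m) z"
proof -
  have nz: "z - complex_of_real (Re m) \<noteq> 0"
  proof
    assume "z - complex_of_real (Re m) = 0"
    hence "Im (z - complex_of_real (Re m)) = 0" by simp
    thus False using assms by simp
  qed
  show ?thesis unfolding hrefl_def[abs_def] using nz by (intro continuous_intros) auto
qed

lemma hdist_affine:
  assumes "y > 0"
  shows "hdist (complex_of_real x + complex_of_real y * z) (complex_of_real x + complex_of_real y * w) = hdist z w"
proof -
  have "cmod (complex_of_real x + complex_of_real y * z - (complex_of_real x + complex_of_real y * w)) = y * cmod (z - w)"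
    using assms by (simp add: norm_mult flip: right_diff_distrib)
  moreover have "y^2 * c / (2 * (y * a) * (y * b)) = c / (2 * a * b)" for a b c :: real
  proof -
    have "2 * (y*a) * (y*b) = y^2 * (2*a*b)" by (simp add: power2_eq_square algebra_simps)
    moreover have "y^2 \<noteq> 0" using assms by simp
    ultimately show ?thesis by (metis nonzero_mult_divide_mult_cancel_left)
  qed
  ultimately show ?thesis using assms by (simp add: hdist_def power_mult_distrib)
qed

lemma arcosh_double:
  fixes C :: real
  assumes "C \<ge> 1"
  shows "arcosh (2 * C^2 - 1) = 2 * arcosh C"
proof -
  define u where "u = arcosh C"
  have u: "u \<ge> 0" "cosh u = C" using arcosh_nonneg_real[OF assms] cosh_arcosh_real[OF assms] by (simp_all add: u_def)
  have "cosh (2*u) = 2 * C^2 - 1"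
    using u cosh_square_eq[of u] by (simp add: cosh_double)
  hence "arcosh (2 * C^2 - 1) = arcosh (cosh (2*u))" by simp
  also have "\<dots> = 2*u" using u by (simp add: arcosh_cosh_real)
  finally show ?thesis by (simp add: u_def)
qed

lemma hdist_i_facts:
  assumes "Im b > 0"
  shows "hdist b \<i> = hdist \<i> (- 1 / b)" "hdist b (- 1 / b) = 2 * hdist b \<i>"
proof -
  define X where "X = Re b"
  define Y where "Y = Im b"
  define N where "N = X^2 + Y^2"
  have Y: "Y > 0" using assms by (simp add: Y_def)
  have N: "N > 0" using Y by (simp add: N_def add_nonneg_pos)
  have inv: "- 1 / b = Complex (- X / N) (Y / N)"
    by (simp add: complex_eq_iff X_def Y_def N_def Re_divide Im_divide power2_eq_square)
  have K1: "(cmod (b - \<i>))^2 / (2 * Im b * Im \<i>) = (X^2 + (Y - 1)^2) / (2 * Y)"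
    by (simp add: cmod_power2 X_def Y_def)
  have K2: "(cmod (\<i> - (- 1 / b)))^2 / (2 * Im \<i> * Im (- 1 / b)) = (X^2 + (Y - 1)^2) / (2 * Y)"
  proof -
    have "(cmod (\<i> - (- 1 / b)))^2 / (2 * Im \<i> * Im (- 1 / b)) = ((X/N)^2 + (1 - Y/N)^2) / (2 * (Y / N))"
      unfolding inv cmod_power2 by simp
    also have "\<dots> = (X^2 + (N - Y)^2) / (2 * N * Y)"
      using N Y by (simp add: field_simps power2_eq_square)
    also have "X^2 + (N - Y)^2 = N * (X^2 + (Y - 1)^2)"
      by (simp add: N_def power2_eq_square algebra_simps)
    also have "N * (X^2 + (Y - 1)^2) / (2 * N * Y) = (X^2 + (Y - 1)^2) / (2 * Y)"
    proof -
      have "2 * N * Y = N * (2 * Y)" by simp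
      thus ?thesis using N by (simp only: nonzero_mult_divide_mult_cancel_left less_irrefl)
    qed
    finally show ?thesis .
  qed
  show "hdist b \<i> = hdist \<i> (- 1 / b)" unfolding hdist_def K1 K2 ..
  define C where "C = 1 + (X^2 + (Y - 1)^2) / (2 * Y)"
  have C1: "C \<ge> 1" using Y by (simp add: C_def)
  have K3: "1 + (cmod (b - (- 1 / b)))^2 / (2 * Im b * Im (- 1 / b)) = 2 * C^2 - 1"
  proof -
    have "(cmod (b - (- 1 / b)))^2 / (2 * Im b * Im (- 1 / b)) = ((X + X/N)^2 + (Y - Y/N)^2) / (2 * Y * (Y / N))"
      unfolding inv by (simp add: cmod_power2 X_def Y_def)
    also have "\<dots> = (X^2 * (N + 1)^2 + Y^2 * (N - 1)^2) / (2 * N * Y^2)"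
      using N Y by (simp add: field_simps power2_eq_square)
    finally have "1 + (cmod (b - (- 1 / b)))^2 / (2 * Im b * Im (- 1 / b)) = 1 + (X^2 * (N + 1)^2 + Y^2 * (N - 1)^2) / (2 * N * Y^2)" by simp
    also have "\<dots> = (N + 1)^2 / (2 * Y^2) - 1"
    proof -
      have "2 * N * Y^2 + (X^2 * (N + 1)^2 + Y^2 * (N - 1)^2) = N * (N + 1)^2 - 2 * N * Y^2"
        by (simp add: N_def power2_eq_square algebra_simps)
      thus ?thesis using N Y by (simp add: field_simps power2_eq_square)
    qed
    also have "\<dots> = 2 * C^2 - 1"
    proof -
      have Ce: "C = (N + 1) / (2 * Y)" using Y by (simp add: C_def N_def field_simps power2_eq_square)
      have "2 * C^2 = (N+1)^2/(2*Y^2)" unfolding Ce by (simp add: power_divide power_mult_distrib)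
      thus ?thesis by simp
    qed
    finally show ?thesis .
  qed
  show "hdist b (- 1 / b) = 2 * hdist b \<i>"
    unfolding hdist_def K3 K1 C_def[symmetric] by (rule arcosh_double[OF C1])
qed

lemma refl_facts:
  assumes m: "Im m > 0" and z: "Im z > 0"
  shows "hdist z m = hdist m (hrefl m z)" "hdist z (hrefl m z) = 2 * hdist z m"
proof -
  define x where "x = Re m"
  define y where "y = Im m"
  have y: "y > 0" using m by (simp add: y_def)
  define b where "b = (z - complex_of_real x) / complex_of_real y"
  have yc: "complex_of_real y \<noteq> 0" using y by simp
  have bz: "z = complex_of_real x + complex_of_real y * b" using yc by (simp add: b_def)
  have bm: "m = complex_of_real x + complex_of_real y * \<i>" by (simp add: x_def y_def complex_eq_iff)
  have b: "Im b > 0" using z y by (simp add: b_def Im_divide_of_real)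
  have bnz: "b \<noteq> 0" using b by auto
  have br: "hrefl m z = complex_of_real x + complex_of_real y * (- 1 / b)"
  proof -
    have "hrefl m z = complex_of_real x - complex_of_real (y^2) / (complex_of_real y * b)"
      unfolding hrefl_def using bz by (simp add: x_def y_def)
    thus ?thesis using yc bnz by (simp add: field_simps power2_eq_square)
  qed
  have "hdist z m = hdist b \<i>" unfolding bz bm by (rule hdist_affine[OF y])
  moreover have "hdist m (hrefl m z) = hdist \<i> (- 1 / b)" unfolding br unfolding bm by (rule hdist_affine[OF y])
  moreover have "hdist z (hrefl m z) = hdist b (- 1 / b)" unfolding br unfolding bz by (rule hdist_affine[OF y])
  ultimately show "hdist z m = hdist m (hrefl m z)" "hdist z (hrefl m z) = 2 * hdist z m"
    using hdist_i_facts[OF b] by simp_all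
qed

lemma hdist_small:
  assumes a: "Im a > 0" and e: "\<epsilon> > 0"
  shows "\<exists>\<delta>>0. \<forall>z. Im z > 0 \<and> hdist z a < \<delta> \<longrightarrow> cmod (z - a) < \<epsilon>"
proof -
  define Y where "Y = Im a"
  have Y: "Y > 0" using a by (simp add: Y_def)
  define k where "k = min (\<epsilon>^2/(4*Y^2)) (\<epsilon>/(4*Y))"
  have kp: "k > 0" using Y e by (simp add: k_def)
  have k1: "2*k*Y^2 \<le> \<epsilon>^2/2"
  proof -
    have "k \<le> \<epsilon>^2/(4*Y^2)" by (simp add: k_def)
    hence "k * (4*Y^2) \<le> \<epsilon>^2" using Y by (simp add: field_simps)
    thus ?thesis by simp
  qed
  have k2: "2*k*Y \<le> \<epsilon>/2"
  proof -
    have "k \<le> \<epsilon>/(4*Y)" by (simp add: k_def)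
    hence "k * (4*Y) \<le> \<epsilon>" using Y by (simp add: field_simps)
    thus ?thesis by simp
  qed
  define \<delta> where "\<delta> = arcosh (1 + k)"
  have dp: "\<delta> > 0" using kp by (simp add: \<delta>_def)
  have "cmod (z - a) < \<epsilon>" if z: "Im z > 0" "hdist z a < \<delta>" for z
  proof (rule ccontr)
    assume "\<not> cmod (z - a) < \<epsilon>"
    hence De: "cmod (z - a) \<ge> \<epsilon>" by simp
    define D where "D = cmod (z - a)"
    define K where "K = D^2 / (2 * Im z * Y)"
    have K0: "K \<ge> 0" using z Y by (simp add: K_def)
    have "arcosh (1 + K) < arcosh (1 + k)" using z(2) by (simp add: hdist_def K_def D_def Y_def \<delta>_def)
    hence "K < k" using K0 kp by simp
    hence "D^2 < k * (2 * Im z * Y)" using z Y by (simp add: K_def field_simps)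
    moreover have "Im z \<le> Y + D"
    proof -
      have "\<bar>Im (z - a)\<bar> \<le> cmod (z - a)" by (rule abs_Im_le_cmod)
      thus ?thesis by (simp add: Y_def D_def)
    qed
    moreover have "k * (2 * Im z * Y) \<le> k * (2 * (Y + D) * Y)"
      using kp Y \<open>Im z \<le> Y + D\<close> by (intro mult_left_mono) auto
    ultimately have "D^2 < 2*k*Y^2 + 2*k*Y*D"
      by (simp add: algebra_simps power2_eq_square)
    moreover have "2*k*Y*D \<le> \<epsilon>/2 * D" using k2 by (intro mult_right_mono) (auto simp: D_def)
    ultimately have "D^2 < \<epsilon>^2/2 + \<epsilon>/2 * D" using k1 by linarith
    moreover have "\<epsilon>^2 \<le> D^2" using De e unfolding D_def by (intro power_mono) auto
    moreover have "\<epsilon> * D \<le> D * D" using De e unfolding D_def by (intro mult_right_mono) auto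
    ultimately show False by (simp add: power2_eq_square)
  qed
  thus ?thesis using dp by blast
qed

lemma mid_in_F:
  assumes F: "open F" "F \<subseteq> hplane" "hconvex F" and p: "p \<in> F" and w: "w \<in> closure F" "Im w > 0"
  shows "mid p w \<in> F"
proof -
  have pI: "Im p > 0" using p F(2) by (auto simp: hplane_def)
  define m where "m = mid p w"
  have mI: "Im m > 0" using mid_Im[OF pI w(2)] by (simp add: m_def)
  have rw: "hrefl m w = p" using refl_mid[OF pI w(2)] by (simp add: m_def)
  obtain \<epsilon> where e: "\<epsilon> > 0" "ball p \<epsilon> \<subseteq> F" using F(1) p by (auto simp: open_contains_ball)
  have "isCont (hrefl m) w" by (rule refl_cont[OF w(2)])
  then obtain d where d: "d > 0" "\<And>z. dist z w < d \<Longrightarrow> dist (hrefl m z) (hrefl m w) < \<epsilon>"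
    using e(1) unfolding continuous_at_eps_delta by blast
  obtain b where b: "b \<in> F" "dist b w < d" using w(1) d(1) by (metis closure_approachable)
  have bI: "Im b > 0" using b F(2) by (auto simp: hplane_def)
  have q: "hrefl m b \<in> F" using d(2)[OF b(2)] rw e(2) by (auto simp: dist_commute)
  have "m \<in> hseg b (hrefl m b)"
    using refl_facts[OF mI bI] mI by (simp add: hseg_def hplane_def hdist_sym)
  hence "m \<in> F" using F(3) b(1) q unfolding hconvex_def by blast
  thus ?thesis by (simp add: m_def)
qed

lemma FL_disjoint:
  assumes F: "open F" "F \<subseteq> hplane" "hconvex F"
    and a: "a \<in> closure F" "Im a > 0" "psi A B C a = 0"
    and r: "r > 0" "\<And>z. Im z > 0 \<Longrightarrow> psi A B C z = 0 \<Longrightarrow> cmod (z - a) < r \<Longrightarrow> z \<notin> F"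
    and p: "p \<in> F" "psi A B C p = 0"
  shows False
proof -
  define q where "q = (\<lambda>n. ((\<lambda>x. mid x a) ^^ n) p)"
  have qS: "q (Suc n) = mid (q n) a" for n by (simp add: q_def)
  have pI: "Im p > 0" using p F(2) by (auto simp: hplane_def)
  have P: "q n \<in> F \<and> psi A B C (q n) = 0 \<and> Im (q n) > 0 \<and> hdist (q n) a = hdist p a / 2^n" for n
  proof (induction n)
    case 0 thus ?case using p pI by (simp add: q_def)
  next
    case (Suc n)
    define m where "m = mid (q n) a"
    have mF: "m \<in> F" using mid_in_F[OF F _ a(1,2)] Suc by (simp add: m_def)
    have mp: "psi A B C m = 0" using psi_mid[of "q n" a] Suc a by (simp add: m_def)
    have mI: "Im m > 0" using mid_Im[of "q n" a] Suc a by (simp add: m_def)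
    have rw: "hrefl m a = q n" using refl_mid[of "q n" a] Suc a by (simp add: m_def)
    have h: "hdist a m = hdist m (q n)" "hdist a (q n) = 2 * hdist a m"
      using refl_facts[OF mI a(2)] rw by simp_all
    have "hdist m a = hdist (q n) a / 2" using h by (simp add: hdist_sym)
    thus ?case using mF mp mI Suc by (simp add: qS m_def[symmetric])
  qed
  obtain \<delta> where d: "\<delta> > 0" "\<And>z. Im z > 0 \<Longrightarrow> hdist z a < \<delta> \<Longrightarrow> cmod (z - a) < r"
    using hdist_small[OF a(2) r(1)] by blast
  obtain n where n: "hdist p a / \<delta> < 2^n" using real_arch_pow[of 2 "hdist p a / \<delta>"] by auto
  have n': "hdist p a < \<delta> * 2^n" using n d(1) by (simp add: divide_less_eq mult.commute)
  have "hdist p a / 2^n < \<delta>" using n' by (simp add: divide_less_eq)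
  hence "hdist (q n) a < \<delta>" using P[of n] by simp
  hence "cmod (q n - a) < r" using d(2) P[of n] by blast
  thus False using r(2)[of "q n"] P[of n] by blast
qed

lemma hseg_curve:
  assumes "Im a > 0" "Im b > 0" "a \<noteq> b"
  shows "\<exists>C. connected C \<and> a \<in> C \<and> b \<in> C \<and> C \<subseteq> hseg a b \<and>
           (\<forall>A B Cc. psi A B Cc a = 0 \<and> psi A B Cc b = 0 \<longrightarrow> (\<forall>z\<in>C. psi A B Cc z = 0))"
proof -
  obtain g u1 u2 where g: "det g = 1" "u1 > 0" "u2 > 0" "u1 \<noteq> u2"
     "mob g (\<i> * complex_of_real u1) = a" "mob g (\<i> * complex_of_real u2) = b"
    using geod_two[OF assms] by blast
  define f where "f = (\<lambda>u. mob g (\<i> * complex_of_real u))"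
  define Iv where "Iv = {min u1 u2..max u1 u2}"
  define C where "C = f ` Iv"
  have Ivp: "u > 0" if "u \<in> Iv" for u using that g by (auto simp: Iv_def)
  have "continuous_on Iv f"
  proof -
    have "complex_of_real (g$2$1) * (\<i> * complex_of_real u) + complex_of_real (g$2$2) \<noteq> 0" if "u \<in> Iv" for u
      using denom_nz[OF g(1), of "\<i> * complex_of_real u"] Ivp[OF that] by simp
    thus ?thesis unfolding f_def mob_def by (intro continuous_intros) auto
  qed
  hence cC: "connected C" unfolding C_def by (intro connected_continuous_image) (auto simp: Iv_def)
  have aC: "a \<in> C" "b \<in> C" using g by (auto simp: C_def f_def Iv_def)
  have hC: "C \<subseteq> hseg a b"
  proof
    fix z assume "z \<in> C"
    then obtain u where u: "u \<in> Iv" "z = f u" by (auto simp: C_def)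
    have up: "u > 0" using Ivp[OF u(1)] .
    have hi: "Im (\<i> * complex_of_real v) > 0" if "v > 0" for v using that by simp
    have d1: "hdist a z = \<bar>ln u1 - ln u\<bar>" unfolding u(2) f_def g(5)[symmetric]
      using hdist_mob[OF g(1) hi[OF g(2)] hi[OF up]] hdist_iaxis[OF g(2) up] by simp
    have d2: "hdist z b = \<bar>ln u - ln u2\<bar>" unfolding u(2) f_def g(6)[symmetric]
      using hdist_mob[OF g(1) hi[OF up] hi[OF g(3)]] hdist_iaxis[OF up g(3)] by simp
    have d3: "hdist a b = \<bar>ln u1 - ln u2\<bar>" unfolding g(5,6)[symmetric]
      using hdist_mob[OF g(1) hi[OF g(2)] hi[OF g(3)]] hdist_iaxis[OF g(2) g(3)] by simp
    have "min u1 u2 \<le> u" "u \<le> max u1 u2" using u(1) by (auto simp: Iv_def)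
    hence "ln (min u1 u2) \<le> ln u" "ln u \<le> ln (max u1 u2)" using up g by auto
    hence "\<bar>ln u1 - ln u\<bar> + \<bar>ln u - ln u2\<bar> = \<bar>ln u1 - ln u2\<bar>"
      by (cases "u1 \<le> u2") (auto simp: min_def max_def)
    moreover have "z \<in> hplane" using mob_hplane[OF g(1) hi[OF up]] by (simp add: u(2) f_def hplane_def)
    ultimately show "z \<in> hseg a b" using d1 d2 d3 by (simp add: hseg_def)
  qed
  have pC: "\<forall>z\<in>C. psi A B Cc z = 0" if "psi A B Cc a = 0" "psi A B Cc b = 0" for A B Cc
  proof
    fix z assume "z \<in> C"
    then obtain u where u: "u \<in> Iv" "z = f u" by (auto simp: C_def)
    have e1: "alpha A B Cc g * u1^2 + beta A B Cc g = 0" using psi_ab[OF g(1,2)] that g(5) by simp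
    have e2: "alpha A B Cc g * u2^2 + beta A B Cc g = 0" using psi_ab[OF g(1,3)] that g(6) by simp
    have "alpha A B Cc g * (u1^2 - u2^2) = (alpha A B Cc g * u1^2 + beta A B Cc g) - (alpha A B Cc g * u2^2 + beta A B Cc g)"
      by (simp add: algebra_simps)
    hence "alpha A B Cc g * (u1^2 - u2^2) = 0" using e1 e2 by simp
    moreover have "u1^2 \<noteq> u2^2" using g by (simp add: power2_eq_iff_nonneg)
    ultimately have "alpha A B Cc g = 0" by simp
    hence "beta A B Cc g = 0" using e1 by simp
    thus "psi A B Cc z = 0" using psi_ab[OF g(1) Ivp[OF u(1)]] \<open>alpha A B Cc g = 0\<close> by (simp add: u(2) f_def)
  qed
  show ?thesis using cC aC hC pC by blast
qed

lemma case1: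
  assumes L1: "geodesic_line L1" "w1 \<in> L1" "r1 > 0" "\<forall>z. z \<in> L1 \<and> cmod (z - w1) < r1 \<longrightarrow> z \<in> I"
    and L2: "geodesic_line L2" "w2 \<in> L2" "r2 > 0" "\<forall>z. z \<in> L2 \<and> cmod (z - w2) < r2 \<longrightarrow> z \<in> J"
    and ne: "L1 \<noteq> L2"
  shows "haar_G (geod_set I J) > 0"
proof -
  obtain z1 where z1: "z1 \<in> L1" "z1 \<notin> L2" "cmod (z1 - w1) < r1" using line_point_off[OF L1(1) L2(1) ne L1(2,3)] by blast
  obtain z2 where z2: "z2 \<in> L2" "z2 \<notin> L1" "cmod (z2 - w2) < r2" using line_point_off[OF L2(1) L1(1) ne[symmetric] L2(2,3)] by blast
  obtain A1 B1 C1 where P1: "L1 = {z. Im z > 0 \<and> psi A1 B1 C1 z = 0}" using line_psi[OF L1(1)] by blast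
  obtain A2 B2 C2 where P2: "L2 = {z. Im z > 0 \<and> psi A2 B2 C2 z = 0}" using line_psi[OF L2(1)] by blast
  have i: "Im z1 > 0" "Im z2 > 0" using z1 z2 P1 P2 by auto
  show ?thesis
  proof (rule main_pos[of z1 z2 A1 B1 C1 A2 B2 C2 "r1 - cmod (z1 - w1)" "r2 - cmod (z2 - w2)"])
    show "Im z1 > 0" "Im z2 > 0" by (rule i)+
    show "psi A1 B1 C1 z1 = 0" "psi A1 B1 C1 z2 \<noteq> 0" "psi A2 B2 C2 z2 = 0" "psi A2 B2 C2 z1 \<noteq> 0"
      using z1 z2 P1 P2 i by auto
    show "r1 - cmod (z1 - w1) > 0" "r2 - cmod (z2 - w2) > 0" using z1 z2 by auto
    show "z \<in> I" if "Im z > 0" "psi A1 B1 C1 z = 0" "cmod (z - z1) < r1 - cmod (z1 - w1)" for z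
    proof -
      have "cmod (z - w1) \<le> cmod (z - z1) + cmod (z1 - w1)" using norm_triangle_ineq[of "z - z1" "z1 - w1"] by simp
      thus ?thesis using L1(4) that P1 by auto
    qed
    show "z \<in> J" if "Im z > 0" "psi A2 B2 C2 z = 0" "cmod (z - z2) < r2 - cmod (z2 - w2)" for z
    proof -
      have "cmod (z - w2) \<le> cmod (z - z2) + cmod (z2 - w2)" using norm_triangle_ineq[of "z - z2" "z2 - w2"] by simp
      thus ?thesis using L2(4) that P2 by auto
    qed
  qed
qed

lemma off_line:
  assumes Ss: "finite Ss" "\<forall>S\<in>Ss. geodesic_side S" "\<Union>Ss = H"
    and I: "openin (top_of_set H) I" "I \<subseteq> hplane"
    and L: "geodesic_line L" and z: "z \<in> I" "z \<notin> L"
  shows "\<exists>w L' r. geodesic_line L' \<and> w \<in> L' \<and> w \<in> I \<and> r > 0 \<and>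
           (\<forall>y. y \<in> L' \<and> cmod (y - w) < r \<longrightarrow> y \<in> I) \<and> L' \<noteq> L"
proof -
  obtain K where K: "closed K" "L = hplane \<inter> K" using line_closedin[OF L] by (auto simp: closedin_closed)
  have "z \<in> hplane" using z I by auto
  hence "z \<in> - K" using z K by auto
  then obtain \<epsilon> where e: "\<epsilon> > 0" "ball z \<epsilon> \<subseteq> - K" using K(1) open_Compl open_contains_ball by blast
  have o: "openin (top_of_set H) (I \<inter> ball z \<epsilon>)" using I(1) by (intro openin_Int_open) auto
  have ne: "I \<inter> ball z \<epsilon> \<noteq> {}" using z e by auto
  obtain w L' r where d: "geodesic_line L'" "w \<in> L'" "w \<in> I \<inter> ball z \<epsilon>" "r > 0"
     "\<forall>y. y \<in> L' \<and> cmod (y - w) < r \<longrightarrow> y \<in> I \<inter> ball z \<epsilon>"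
    using density[OF Ss o ne] by blast
  have "w \<notin> L" using d(3) e K by auto
  hence "L' \<noteq> L" using d(2) by blast
  thus ?thesis using d by blast
qed

theorem lemma5p1:
  fixes \<Gamma> :: "(real^2^2) set" and F I J :: "complex set"
  assumes "discrete_subgroup \<Gamma>" and "finite_covolume \<Gamma>"
    and "fundamental_polygon \<Gamma> F"
    and "I \<subseteq> hbd F" and "I \<noteq> {}" and "connected I" and "openin (top_of_set (hbd F)) I"
    and "J \<subseteq> hbd F" and "J \<noteq> {}" and "connected J" and "openin (top_of_set (hbd F)) J"
    and "\<not> (\<exists>E. poly_edge F E \<and> I \<subseteq> E \<and> J \<subseteq> E)"
  shows "haar_G (geod_set I J) > 0"
proof -
  have F: "open F" "F \<subseteq> hplane" "hconvex F" "hconvex (closure F \<inter> hplane)"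
    using assms(3) by (auto simp: fundamental_polygon_def)
  obtain Ss where Ss: "finite Ss" "\<forall>S\<in>Ss. geodesic_side S" "\<Union>Ss = hbd F"
    using assms(3) by (auto simp: fundamental_polygon_def)
  define H where "H = hbd F"
  have Hp: "H \<subseteq> hplane" "H \<subseteq> frontier F" by (auto simp: H_def hbd_def)
  have Ip: "I \<subseteq> hplane" "J \<subseteq> hplane" using assms(4,8) Hp by (auto simp: H_def)
  obtain w1 L1 r1 where D1: "geodesic_line L1" "w1 \<in> L1" "w1 \<in> I" "r1 > 0"
      "\<forall>z. z \<in> L1 \<and> cmod (z - w1) < r1 \<longrightarrow> z \<in> I"
    using density[OF Ss assms(7,5)] by blast
  obtain w2 L2 r2 where D2: "geodesic_line L2" "w2 \<in> L2" "w2 \<in> J" "r2 > 0"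
      "\<forall>z. z \<in> L2 \<and> cmod (z - w2) < r2 \<longrightarrow> z \<in> J"
    using density[OF Ss assms(11,9)] by blast
  show ?thesis
  proof (cases "L1 = L2")
    case False
    thus ?thesis using case1[OF D1(1,2,4,5) D2(1,2,4,5)] by blast
  next
    case True
    show ?thesis
    proof (cases "\<exists>z\<in>I. z \<notin> L1")
      case True
      then obtain z where "z \<in> I" "z \<notin> L1" by blast
      then obtain w L' r where "geodesic_line L'" "w \<in> L'" "w \<in> I" "r > 0"
           "\<forall>y. y \<in> L' \<and> cmod (y - w) < r \<longrightarrow> y \<in> I" "L' \<noteq> L1"
        using off_line[OF Ss assms(7) Ip(1) D1(1)] by blast
      thus ?thesis using case1[OF _ _ _ _ D2(1,2,4,5)] \<open>L1 = L2\<close> by blast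
    next
    case False
    hence IL: "I \<subseteq> L1" by blast
    show ?thesis
    proof (cases "\<exists>z\<in>J. z \<notin> L2")
      case True
      then obtain z where "z \<in> J" "z \<notin> L2" by blast
      then obtain w L' r where "geodesic_line L'" "w \<in> L'" "w \<in> J" "r > 0"
           "\<forall>y. y \<in> L' \<and> cmod (y - w) < r \<longrightarrow> y \<in> J" "L' \<noteq> L2"
        using off_line[OF Ss assms(11) Ip(2) D2(1)] by blast
      thus ?thesis using case1[OF D1(1,2,4,5)] \<open>L1 = L2\<close> by blast
    next
      case False
      hence JL: "J \<subseteq> L1" using \<open>L1 = L2\<close> by blast
      define L where "L = L1"
      obtain A B C where P: "L = {z. Im z > 0 \<and> psi A B C z = 0}" using line_psi[OF D1(1)] by (auto simp: L_def)
      have frF: "frontier F \<inter> F = {}" using F(1) by (auto simp: frontier_def interior_open)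
      have IH: "I \<subseteq> H" "J \<subseteq> H" using assms(4,8) by (auto simp: H_def)
      have w1c: "w1 \<in> closure F" using D1(3) IH Hp by (auto simp: frontier_def)
      have w1p: "Im w1 > 0" "psi A B C w1 = 0" using D1(2) P by (auto simp: L_def)
      have FL: "z \<notin> F" if "z \<in> L" for z
      proof
        assume zF: "z \<in> F"
        show False
        proof (rule FL_disjoint[OF F(1,2,3) w1c w1p D1(4)])
          show "y \<notin> F" if "Im y > 0" "psi A B C y = 0" "cmod (y - w1) < r1" for y
          proof -
            have "y \<in> I" using D1(5) that P by (auto simp: L_def)
            thus ?thesis using IH Hp frF by auto
          qed
          show "z \<in> F" by (rule zF)
          show "psi A B C z = 0" using that P by auto
        qed
      qed
      obtain Cu where Cu: "connected Cu" "w1 \<in> Cu" "w2 \<in> Cu" "Cu \<subseteq> L \<inter> H"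
      proof (cases "w1 = w2")
        case True
        thus ?thesis using that[of "{w1}"] D1(2,3) IH by (auto simp: L_def)
      next
        case False
        have w2p: "Im w2 > 0" "psi A B C w2 = 0" using D2(2) P \<open>L1 = L2\<close> by (auto simp: L_def)
        obtain C0 where C0: "connected C0" "w1 \<in> C0" "w2 \<in> C0" "C0 \<subseteq> hseg w1 w2"
            "\<forall>A B Cc. psi A B Cc w1 = 0 \<and> psi A B Cc w2 = 0 \<longrightarrow> (\<forall>z\<in>C0. psi A B Cc z = 0)"
          using hseg_curve[OF w1p(1) w2p(1) False] by blast
        have "w1 \<in> closure F \<inter> hplane" "w2 \<in> closure F \<inter> hplane"
          using D1(3) D2(3) IH Hp by (auto simp: frontier_def)
        hence hs: "hseg w1 w2 \<subseteq> closure F \<inter> hplane" using F(4) unfolding hconvex_def by blast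
        have "C0 \<subseteq> L \<inter> H"
        proof
          fix z assume z: "z \<in> C0"
          have zc: "z \<in> closure F" "Im z > 0" using z C0(4) hs by (auto simp: hplane_def)
          have "psi A B C z = 0" using C0(5) w1p w2p z by blast
          hence zL: "z \<in> L" using P zc by auto
          hence "z \<notin> F" by (rule FL)
          hence "z \<in> frontier F" using zc F(1) by (simp add: frontier_def interior_open)
          thus "z \<in> L \<inter> H" using zL zc by (simp add: H_def hbd_def hplane_def)
        qed
        thus ?thesis using that C0(1,2,3) by blast
      qed
      define K where "K = I \<union> Cu \<union> J"
      have cK: "connected K"
      proof -
        have "I \<inter> Cu \<noteq> {}" using Cu D1(3) by auto
        hence c1: "connected (I \<union> Cu)" using connected_Un[OF assms(6) Cu(1)] by blast
        have "(I \<union> Cu) \<inter> J \<noteq> {}" using Cu D2(3) by auto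
        thus ?thesis unfolding K_def using connected_Un[OF c1 assms(10)] by blast
      qed
      have KLH: "K \<subseteq> L \<inter> H" using IL JL IH Cu by (auto simp: K_def L_def)
      define E where "E = connected_component_set (L \<inter> H) w1"
      have KE: "K \<subseteq> E" unfolding E_def using D1(3) cK KLH by (intro connected_component_maximal) (auto simp: K_def)
      obtain z' where z': "z' \<in> L" "z' \<noteq> w1" "cmod (z' - w1) < r1"
        using line_near_point[OF D1(1,2,4)] by (auto simp: L_def)
      have z'I: "z' \<in> I" using D1(5) z' by (auto simp: L_def)
      have EL: "E \<subseteq> L \<inter> H" unfolding E_def by (rule connected_component_subset)
      have "poly_edge F E"
        unfolding poly_edge_def
      proof (intro conjI allI impI)
        have cl: "closedin (top_of_set hplane) (L \<inter> H)"
        proof -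
          have "closedin (top_of_set hplane) (hplane \<inter> frontier F)"
            by (intro closedin_closed_Int) auto
          moreover have "H = hplane \<inter> frontier F" by (auto simp: H_def hbd_def)
          ultimately show ?thesis using line_closedin[OF D1(1)] by (auto simp: L_def intro: closedin_Int)
        qed
        show "geodesic_side E"
          unfolding geodesic_side_def
        proof (intro conjI)
          show "\<exists>L. geodesic_line L \<and> E \<subseteq> L" using D1(1) EL by (auto simp: L_def)
          show "connected E" by (simp add: E_def)
          show "closedin (top_of_set hplane) E"
            using closedin_trans[OF _ cl] closedin_connected_component by (auto simp: E_def)
          show "\<exists>z w. z \<in> E \<and> w \<in> E \<and> z \<noteq> w" using KE z'I D1(3) z'(2) by (auto simp: K_def)
        qed
        show "E \<subseteq> hbd F" using EL by (auto simp: H_def)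
        fix E' assume E': "geodesic_side E' \<and> E \<subseteq> E' \<and> E' \<subseteq> hbd F"
        then obtain L' where L': "geodesic_line L'" "E' \<subseteq> L'" "connected E'" unfolding geodesic_side_def by blast
        have "w1 \<in> E" "z' \<in> E" using KE D1(3) z'I by (auto simp: K_def)
        hence "L' = L" using two_points_line[OF L' (1) D1(1), of w1 z'] L' E' z'(2) D1(2) z'(1)
          by (auto simp: L_def)
        hence "E' \<subseteq> L \<inter> H" using L' E' by (auto simp: H_def)
        hence "E' \<subseteq> E" unfolding E_def using L'(3) \<open>w1 \<in> E\<close> E' by (intro connected_component_maximal) auto
        thus "E' = E" using E' by blast
      qed
      moreover have "I \<subseteq> E" "J \<subseteq> E" using KE by (auto simp: K_def)
      ultimately show ?thesis using assms(12) by blast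
    qed
    qed
  qed
qed

end
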